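(* Let $\lambda\in(0,1)$, let $\tau_0(x)=\lambda x$, $\tau_{1/4}(x)=\lambda(x+\frac14)$, let $X_L$ be their attractor, let $W(x)=\cos^2(2\pi x/\lambda)$, and let $R_W$, $P_x$, $\mathbf{N}_0$, $\mathbf{N}_1$, $h_0$, $h_1$ be as described in the context. Then: (1) $h_0$ is continuous on $X_L$ and $R_Wh_0=h_0$. If $h_0$ has no zeroes on $X_L$, then $h_0\equiv1$. (2) If $\lambda=1-\frac1{2n}$ for some $n\in\mathbb{N}$, then $h_1$ is continuous on $X_L$ and $R_Wh_1=h_1$; both $h_0$ and $h_1$ have zeroes and both are non-constant. If $h_0+h_1$ has no zeroes on $X_L$, then $h_0+h_1\equiv1$.
   Context: $X_L$ is the unique nonempty compact set with $X_L=\tau_0(X_L)\cup\tau_{1/4}(X_L)$. Note $W(\tau_0x)+W(\tau_{1/4}x)=1$ for all $x$. The transfer operator is $(R_Wf)(x)=W(\tau_0x)f(\tau_0x)+W(\tau_{1/4}x)f(\tau_{1/4}x)$. Let $\Omega=\{0,\frac14\}^{\mathbb{N}}$ with the $\sigma$-algebra generated by cylinder sets. For $x\in X_L$, $P_x$ is the unique probability measure on $\Omega$ such that for every $n$ and $\omega_1,\dots,\omega_n\in\{0,\frac14\}$, the cylinder $\{\eta\in\Omega:\eta_i=\omega_i,\ i\le n\}$ has measure $W(\tau_{\omega_1}x)W(\tau_{\omega_2}\tau_{\omega_1}x)\cdots W(\tau_{\omega_n}\cdots\tau_{\omega_1}x)$. $\mathbf{N}_0$ is the set of $\omega\in\Omega$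 with $\omega_n=0$ for all sufficiently large $n$; $\mathbf{N}_1$ is the set of $\omega\in\Omega$ with $\omega_n=\frac14$ for all sufficiently large $n$. $h_0(x)=P_x(\mathbf{N}_0)$ and $h_1(x)=P_x(\mathbf{N}_1)$ for $x\in X_L$. *)

theory Defs
  imports "HOL-Probability.Probability"
begin

definition tau :: "real \<Rightarrow> real \<Rightarrow> real \<Rightarrow> real" where
  "tau lam a x = lam * (x + a)"

definition XL :: "real \<Rightarrow> real set" where
  "XL lam = (THE X. compact X \<and> X \<noteq> {} \<and>
      X = tau lam 0 ` X \<union> tau lam (1/4) ` X)"

definition W :: "real \<Rightarrow> real \<Rightarrow> real" where
  "W lam x = (cos (2 * pi * x / lam))\<^sup>2"

definition RW :: "real \<Rightarrow> (real \<Rightarrow> real) \<Rightarrow> real \<Rightarrow> real" where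
  "RW lam f x = W lam (tau lam 0 x) * f (tau lam 0 x)
              + W lam (tau lam (1/4) x) * f (tau lam (1/4) x)"

text \<open>Path space Omega = {0,1/4}^N; the sequence omega_1, omega_2, ... is stored as omega 0, omega 1, ...\<close>
definition Omega :: "(nat \<Rightarrow> real) set" where
  "Omega = (UNIV \<rightarrow> {0, 1/4})"

definition cyl :: "nat \<Rightarrow> (nat \<Rightarrow> real) \<Rightarrow> (nat \<Rightarrow> real) set" where
  "cyl n \<omega> = {\<eta> \<in> Omega. \<forall>i<n. \<eta> i = \<omega> i}"

definition Cyls :: "(nat \<Rightarrow> real) set set" where
  "Cyls = {cyl n \<omega> | n \<omega>. \<omega> \<in> Omega}"

fun orbit :: "real \<Rightarrow> real \<Rightarrow> (nat \<Rightarrow> real) \<Rightarrow> nat \<Rightarrow> real" where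
  "orbit lam x \<omega> 0 = x"
| "orbit lam x \<omega> (Suc k) = tau lam (\<omega> k) (orbit lam x \<omega> k)"

definition Px :: "real \<Rightarrow> real \<Rightarrow> (nat \<Rightarrow> real) measure" where
  "Px lam x = (THE M. prob_space M \<and> space M = Omega \<and> sets M = sigma_sets Omega Cyls \<and>
      (\<forall>n. \<forall>\<omega>\<in>Omega. emeasure M (cyl n \<omega>) =
          ennreal (\<Prod>k\<in>{1..n}. W lam (orbit lam x \<omega> k))))"

definition N0 :: "(nat \<Rightarrow> real) set" where
  "N0 = {\<omega> \<in> Omega. \<exists>N. \<forall>n\<ge>N. \<omega> n = 0}"

definition N1 :: "(nat \<Rightarrow> real) set" where
  "N1 = {\<omega> \<in> Omega. \<exists>N. \<forall>n\<ge>N. \<omega> n = 1/4}"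

definition h0 :: "real \<Rightarrow> real \<Rightarrow> real" where
  "h0 lam x = measure (Px lam x) N0"

definition h1 :: "real \<Rightarrow> real \<Rightarrow> real" where
  "h1 lam x = measure (Px lam x) N1"

end

theory Submission
  imports Defs
begin

lemma abs_cos_diff_le: "\<bar>cos w - cos z\<bar> \<le> \<bar>w - z\<bar>" for w z :: real
proof -
  have "\<bar>cos w - cos z\<bar> = 2 * \<bar>sin ((w + z) / 2)\<bar> * \<bar>sin ((z - w) / 2)\<bar>"
    by (simp add: cos_diff_cos abs_mult)
  also have "\<dots> \<le> 2 * 1 * \<bar>(z - w) / 2\<bar>"
    by (intro mult_mono abs_sin_x_le_abs_x) auto
  finally show ?thesis by simp
qed

lemma abs_cos2_diff_le: "\<bar>(cos a)\<^sup>2 - (cos b)\<^sup>2\<bar> \<le> \<bar>a - b\<bar>" for a b :: real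
proof -
  have "(cos a)\<^sup>2 - (cos b)\<^sup>2 = (cos (2*a) - cos (2*b)) / 2"
    by (simp add: cos_double_cos)
  moreover have "\<bar>cos (2*a) - cos (2*b)\<bar> \<le> \<bar>2*a - 2*b\<bar>" by (rule abs_cos_diff_le)
  ultimately show ?thesis by simp
qed

inductive_set Sorb :: "real \<Rightarrow> real set" for lam :: real where
  S0: "0 \<in> Sorb lam"
| SS: "s \<in> Sorb lam \<Longrightarrow> a \<in> {0, 1/4} \<Longrightarrow> tau lam a s \<in> Sorb lam"

definition cL :: "real \<Rightarrow> real" where "cL lam = lam / (4 * (1 - lam))"

context
  fixes lam :: real
  assumes lam0: "0 < lam" and lam1: "lam < 1"
begin

lemma W0_eq: "W lam (tau lam 0 x) = (cos (2*pi*x))\<^sup>2"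
proof -
  have "2 * pi * (lam * (x + 0)) / lam = 2*pi*x" using lam0 by simp
  then show ?thesis by (simp only: W_def tau_def)
qed

lemma W1_eq: "W lam (tau lam (1/4) x) = (sin (2*pi*x))\<^sup>2"
proof -
  have "2 * pi * (lam * (x + 1/4)) / lam = 2*pi*x + pi/2"
    using lam0 by (simp add: field_simps)
  then show ?thesis by (simp add: W_def tau_def cos_add)
qed

lemma W_sum: "W lam (tau lam 0 x) + W lam (tau lam (1/4) x) = 1"
  by (simp add: W0_eq W1_eq)

lemma W_nonneg: "0 \<le> W lam y"
  by (simp add: W_def)

lemma W_le1: "W lam y \<le> 1"
  by (simp add: W_def cos_squared_eq)

lemma W_lip:
  assumes "a \<in> {0, 1/4}"
  shows "\<bar>W lam (tau lam a x) - W lam (tau lam a y)\<bar> \<le> 2*pi*\<bar>x - y\<bar>"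
proof -
  have "\<bar>(cos (2*pi*x))\<^sup>2 - (cos (2*pi*y))\<^sup>2\<bar> \<le> \<bar>2*pi*x - 2*pi*y\<bar>"
    by (rule abs_cos2_diff_le)
  also have "\<dots> = 2*pi*\<bar>x - y\<bar>"
    by (simp add: abs_mult flip: right_diff_distrib)
  finally have *: "\<bar>(cos (2*pi*x))\<^sup>2 - (cos (2*pi*y))\<^sup>2\<bar> \<le> 2*pi*\<bar>x - y\<bar>" .
  show ?thesis
  proof (cases "a = 0")
    case True then show ?thesis using * by (simp add: W0_eq)
  next
    case False
    have **: "\<bar>W lam (tau lam (1/4) x) - W lam (tau lam (1/4) y)\<bar> \<le> 2*pi*\<bar>x - y\<bar>"
      using * by (simp add: W1_eq sin_squared_eq abs_minus_commute)
    have "a = 0 \<or> a = 1/4" using assms by simp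
    then show ?thesis using False ** by blast
  qed
qed

lemma tau_dist: "\<bar>tau lam a x - tau lam a y\<bar> = lam * \<bar>x - y\<bar>"
  using lam0 by (simp add: tau_def abs_mult flip: right_diff_distrib)

lemma cL_fix: "tau lam (1/4) (cL lam) = cL lam"
  using lam1 by (simp add: tau_def cL_def field_simps)

lemma cL_pos: "0 < cL lam"
  using lam0 lam1 by (simp add: cL_def)

lemma Sorb_bound: "s \<in> Sorb lam \<Longrightarrow> 0 \<le> s \<and> s \<le> cL lam"
proof (induction rule: Sorb.induct)
  case S0 then show ?case using cL_pos by simp
next
  case (SS s a)
  have "lam * (cL lam + 1/4) = cL lam" using cL_fix by (simp add: tau_def)
  moreover have "lam * (s + a) \<le> lam * (cL lam + 1/4)"
    using SS lam0 by (intro mult_left_mono) auto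
  moreover have "0 \<le> lam * (s + a)" using SS lam0 by auto
  ultimately show ?case by (simp add: tau_def)
qed

lemma Sorb_inv: "Sorb lam = tau lam 0 ` Sorb lam \<union> tau lam (1/4) ` Sorb lam"
proof
  show "Sorb lam \<subseteq> tau lam 0 ` Sorb lam \<union> tau lam (1/4) ` Sorb lam"
  proof
    fix s assume "s \<in> Sorb lam"
    then show "s \<in> tau lam 0 ` Sorb lam \<union> tau lam (1/4) ` Sorb lam"
    proof cases
      case S0
      have "tau lam 0 0 = 0" by (simp add: tau_def)
      then show ?thesis using S0 Sorb.S0 by (metis UnI1 image_eqI)
    next
      case (SS s' a)
      from SS(3) have "a = 0 \<or> a = 1/4" by simp
      then show ?thesis using SS(1,2) by blast
    qed
  qed
next
  show "tau lam 0 ` Sorb lam \<union> tau lam (1/4) ` Sorb lam \<subseteq> Sorb lam"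
    by (auto intro: Sorb.SS)
qed

lemma cont_tau: "continuous_on A (tau lam a)"
  unfolding tau_def by (intro continuous_intros)

lemma bounded_Sorb: "bounded (Sorb lam)"
  using Sorb_bound by (intro bounded_subset[OF bounded_closed_interval[of 0 "cL lam"]]) auto

lemma compact_clS: "compact (closure (Sorb lam))"
  using bounded_Sorb compact_closure by blast

lemma clS_bound: "closure (Sorb lam) \<subseteq> {0..cL lam}"
  using Sorb_bound by (intro closure_minimal) auto

lemma image_closure_tau: "tau lam a ` closure (Sorb lam) = closure (tau lam a ` Sorb lam)"
proof
  show "tau lam a ` closure (Sorb lam) \<subseteq> closure (tau lam a ` Sorb lam)"
    by (intro image_closure_subset cont_tau closed_closure) (meson closure_subset imageI subsetD)
  have "compact (tau lam a ` closure (Sorb lam))"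
    by (intro compact_continuous_image cont_tau compact_clS)
  then show "closure (tau lam a ` Sorb lam) \<subseteq> tau lam a ` closure (Sorb lam)"
    by (meson closure_minimal compact_imp_closed image_mono closure_subset)
qed

lemma clS_inv: "closure (Sorb lam) = tau lam 0 ` closure (Sorb lam) \<union> tau lam (1/4) ` closure (Sorb lam)"
  by (subst Sorb_inv) (simp add: image_closure_tau closure_Un)

lemma attractor_unique:
  assumes X: "compact X" "X \<noteq> {}" "X = tau lam 0 ` X \<union> tau lam (1/4) ` X"
  shows "X = closure (Sorb lam)"
proof -
  obtain m where m: "m \<in> X" "\<And>x. x \<in> X \<Longrightarrow> m \<le> x"
    using compact_attains_inf[OF X(1,2)] by blast
  have "tau lam 0 m \<in> X" using X(3) m(1) by blast
  then have "m \<le> lam * m" using m(2) by (simp add: tau_def)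
  then have "(1 - lam) * m \<le> 0" by (simp add: algebra_simps)
  then have m1: "m \<le> 0" using lam1 by (simp add: mult_le_0_iff)
  from m(1) X(3) obtain x' a where xa: "x' \<in> X" "a \<in> {0, 1/4}" "m = tau lam a x'" by blast
  have a0: "0 \<le> a" using xa(2) by auto
  have "lam * m \<le> lam * (x' + a)" using m(2)[OF xa(1)] a0 lam0 by (intro mult_left_mono) auto
  then have "lam * m \<le> m" using xa(3) by (simp add: tau_def)
  then have "0 \<le> (1 - lam) * m" by (simp add: algebra_simps)
  then have "0 \<le> m" using lam1 by (simp add: zero_le_mult_iff)
  with m1 have "m = 0" by simp
  with m have X0: "0 \<in> X" by simp
  have SX: "Sorb lam \<subseteq> X"
  proof
    fix s assume "s \<in> Sorb lam" then show "s \<in> X"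
    proof (induction rule: Sorb.induct)
      case S0 show ?case using X0 .
    next
      case (SS s a)
      have "a = 0 \<or> a = 1/4" using SS.hyps by simp
      then have "tau lam a s \<in> tau lam 0 ` X \<union> tau lam (1/4) ` X" using SS.IH by blast
      then show ?case by (subst X(3))
    qed
  qed
  have cX: "closed X" using X(1) compact_imp_closed by blast
  have sub1: "closure (Sorb lam) \<subseteq> X" using SX cX closure_minimal by blast
  obtain B where B: "\<And>x. x \<in> X \<Longrightarrow> \<bar>x\<bar> \<le> B"
    using compact_imp_bounded[OF X(1)] unfolding bounded_iff by auto
  have approx: "\<forall>x\<in>X. \<exists>s\<in>Sorb lam. \<bar>x - s\<bar> \<le> lam ^ n * B" for n
  proof (induction n)
    case 0
    show ?case
    proof
      fix x assume "x \<in> X"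
      then have "\<bar>x - 0\<bar> \<le> lam ^ 0 * B" using B by simp
      then show "\<exists>s\<in>Sorb lam. \<bar>x - s\<bar> \<le> lam ^ 0 * B" using Sorb.S0 by blast
    qed
  next
    case (Suc n)
    show ?case
    proof
      fix x assume "x \<in> X"
      then obtain x' a where xa: "x' \<in> X" "a \<in> {0, 1/4}" "x = tau lam a x'" using X(3) by blast
      obtain s where s: "s \<in> Sorb lam" "\<bar>x' - s\<bar> \<le> lam ^ n * B" using Suc xa(1) by blast
      have "tau lam a s \<in> Sorb lam" using s(1) xa(2) by (rule Sorb.SS)
      moreover have "\<bar>x - tau lam a s\<bar> = lam * \<bar>x' - s\<bar>" using xa(3) tau_dist by simp
      moreover have "lam * \<bar>x' - s\<bar> \<le> lam * (lam ^ n * B)" using s(2) lam0 by simp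
      ultimately have "\<bar>x - tau lam a s\<bar> \<le> lam ^ Suc n * B" by (simp add: mult.assoc)
      then show "\<exists>s\<in>Sorb lam. \<bar>x - s\<bar> \<le> lam ^ Suc n * B" using \<open>tau lam a s \<in> Sorb lam\<close> by blast
    qed
  qed
  have sub2: "X \<subseteq> closure (Sorb lam)"
  proof
    fix x assume x: "x \<in> X"
    have B0: "0 \<le> B" using B[OF x] by simp
    show "x \<in> closure (Sorb lam)"
      unfolding closure_approachable
    proof (intro allI impI)
      fix e :: real assume e: "e > 0"
      obtain n where n: "lam ^ n < e / (B + 1)"
        using real_arch_pow_inv[of "e / (B + 1)" lam] e B0 lam1 by auto
      obtain s where s: "s \<in> Sorb lam" "\<bar>x - s\<bar> \<le> lam ^ n * B" using approx x by blast
      have "lam ^ n * B \<le> lam ^ n * (B + 1)" using lam0 by simp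
      also have "\<dots> < e / (B + 1) * (B + 1)" using n B0 by (intro mult_strict_right_mono) auto
      also have "\<dots> = e" using B0 by simp
      finally have "lam ^ n * B < e" .
      then have "dist s x < e" using s(2) by (simp add: dist_real_def abs_minus_commute)
      then show "\<exists>y\<in>Sorb lam. dist y x < e" using s(1) by blast
    qed
  qed
  show ?thesis using sub1 sub2 by blast
qed

lemma XL_eq: "XL lam = closure (Sorb lam)"
  unfolding XL_def
proof (rule the_equality)
  show "compact (closure (Sorb lam)) \<and> closure (Sorb lam) \<noteq> {} \<and>
    closure (Sorb lam) = tau lam 0 ` closure (Sorb lam) \<union> tau lam (1/4) ` closure (Sorb lam)"
    using compact_clS clS_inv Sorb.S0 closure_subset by blast
next
  fix X assume "compact X \<and> X \<noteq> {} \<and> X = tau lam 0 ` X \<union> tau lam (1/4) ` X"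
  then show "X = closure (Sorb lam)" by (intro attractor_unique) auto
qed

lemma XL_compact: "compact (XL lam)"
  using XL_eq compact_clS by simp

lemma zero_XL: "0 \<in> XL lam"
  using XL_eq Sorb.S0 closure_subset by blast

lemma tau_XL: "x \<in> XL lam \<Longrightarrow> a \<in> {0, 1/4} \<Longrightarrow> tau lam a x \<in> XL lam"
  using XL_eq clS_inv by blast

lemma XL_bound: "x \<in> XL lam \<Longrightarrow> 0 \<le> x \<and> x \<le> cL lam"
  using XL_eq clS_bound by auto

lemma cL_XL: "cL lam \<in> XL lam"
proof -
  obtain M where M: "M \<in> XL lam" "\<And>x. x \<in> XL lam \<Longrightarrow> x \<le> M"
    using compact_attains_sup[OF XL_compact] zero_XL by blast
  have "tau lam (1/4) M \<le> M" using M tau_XL by auto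
  then have "lam * (M + 1/4) \<le> M" by (simp add: tau_def)
  then have "lam / 4 \<le> (1 - lam) * M" by (simp add: algebra_simps)
  then have "cL lam \<le> M" using lam1 by (simp add: cL_def field_simps)
  moreover have "M \<le> cL lam" using XL_bound M by auto
  ultimately show ?thesis using M by simp
qed

end


fun pL :: "real \<Rightarrow> real \<Rightarrow> real list \<Rightarrow> real" where
  "pL lam x [] = 1"
| "pL lam x (a # w) = W lam (tau lam a x) * pL lam (tau lam a x) w"

fun endpt :: "real \<Rightarrow> real \<Rightarrow> real list \<Rightarrow> real" where
  "endpt lam x [] = x"
| "endpt lam x (a # w) = endpt lam (tau lam a x) w"

definition words :: "nat \<Rightarrow> real list set" where
  "words n = {w. length w = n \<and> set w \<subseteq> {0, 1/4}}"

definition cylL :: "real list \<Rightarrow> (nat \<Rightarrow> real) set" where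
  "cylL w = {\<eta> \<in> Omega. \<forall>i<length w. \<eta> i = w ! i}"

lemma words_0: "words 0 = {[]}"
  by (auto simp: words_def)

lemma words_Suc: "words (Suc n) = Cons 0 ` words n \<union> Cons (1/4) ` words n"
proof
  show "words (Suc n) \<subseteq> Cons 0 ` words n \<union> Cons (1/4) ` words n"
  proof
    fix w assume "w \<in> words (Suc n)"
    then obtain a v where w: "w = a # v" "length v = n" "set v \<subseteq> {0, 1/4}" "a \<in> {0, 1/4}"
      by (cases w) (auto simp: words_def)
    then have "v \<in> words n" by (simp add: words_def)
    moreover have "a = 0 \<or> a = 1/4" using w(4) by simp
    ultimately show "w \<in> Cons 0 ` words n \<union> Cons (1/4) ` words n" using w(1) by blast
  qed
qed (auto simp: words_def)

lemma finite_words: "finite (words n)"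
  by (induction n) (simp_all add: words_0 words_Suc)

lemma sum_words_Suc:
  "(\<Sum>w\<in>words (Suc n). f w) = (\<Sum>w\<in>words n. f (0 # w)) + (\<Sum>w\<in>words n. f (1/4 # w))"
proof -
  have "(\<Sum>w\<in>words (Suc n). f w) = (\<Sum>w\<in>Cons 0 ` words n. f w) + (\<Sum>w\<in>Cons (1/4) ` words n. f w)"
    unfolding words_Suc by (intro sum.union_disjoint) (auto simp: finite_words)
  also have "\<dots> = (\<Sum>w\<in>words n. f (0 # w)) + (\<Sum>w\<in>words n. f (1/4 # w))"
    by (simp add: sum.reindex)
  finally show ?thesis .
qed

lemma pL_nonneg: "0 \<le> pL lam x w"
  by (induction w arbitrary: x) (simp_all add: W_def)

lemma pL_le1: "pL lam x w \<le> 1"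
proof (induction w arbitrary: x)
  case (Cons a w)
  have "W lam (tau lam a (x)) * pL lam (tau lam a x) w \<le> 1 * 1"
    using Cons.IH pL_nonneg by (intro mult_mono) (auto simp: W_def cos_squared_eq)
  then show ?case by simp
qed simp

lemma endpt_append: "endpt lam x (w @ v) = endpt lam (endpt lam x w) v"
  by (induction w arbitrary: x) auto

lemma cylL_words_disj:
  assumes "w \<in> words n" "v \<in> words n" "w \<noteq> v"
  shows "cylL w \<inter> cylL v = {}"
proof -
  have "length w = length v" using assms by (simp add: words_def)
  then obtain i where "i < length w" "w ! i \<noteq> v ! i" using assms(3) nth_equalityI by blast
  then show ?thesis using \<open>length w = length v\<close> by (auto simp: cylL_def)
qed

lemma cyl_eq_cylL: "cyl n \<omega> = cylL (map \<omega> [0..<n])"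
  by (auto simp: cyl_def cylL_def)

lemma map_in_words: "\<omega> \<in> Omega \<Longrightarrow> map \<omega> [0..<n] \<in> words n"
  by (auto simp: words_def Omega_def)

lemma pL_snoc: "pL lam x (w @ [a]) = pL lam x w * W lam (tau lam a (endpt lam x w))"
  by (induction w arbitrary: x) (simp_all add: mult.assoc)

lemma orbit_endpt: "orbit lam x \<omega> k = endpt lam x (map \<omega> [0..<k])"
  by (induction k) (simp_all add: endpt_append)

lemma prod_orbit_pL: "(\<Prod>k\<in>{1..n}. W lam (orbit lam x \<omega> k)) = pL lam x (map \<omega> [0..<n])"
  by (induction n) (simp_all add: pL_snoc orbit_endpt endpt_append)

lemma W_nonneg': "0 \<le> W lam y"
  by (simp add: W_def)

context
  fixes lam :: real
  assumes lam0: "0 < lam" and lam1: "lam < 1"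
begin

lemma pL_sum: "(\<Sum>w\<in>words n. pL lam x w) = 1"
proof (induction n arbitrary: x)
  case 0 then show ?case by (simp add: words_0)
next
  case (Suc n)
  show ?case
    by (simp add: sum_words_Suc sum_distrib_left[symmetric] Suc.IH W_sum[OF lam0 lam1])
qed

definition KL :: real where "KL = 4 * pi / (1 - lam)"

lemma KL_nonneg: "0 \<le> KL"
  using lam1 by (simp add: KL_def)

lemma lip_part:
  assumes a: "a \<in> {0, 1/4}"
    and IH: "\<And>x y. (\<Sum>w\<in>words n. \<bar>pL lam x w - pL lam y w\<bar>) \<le> KL * \<bar>x - y\<bar>"
  shows "(\<Sum>w\<in>words n. \<bar>W lam (tau lam a x) * pL lam (tau lam a x) w - W lam (tau lam a y) * pL lam (tau lam a y) w\<bar>)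
     \<le> W lam (tau lam a x) * (KL * (lam * \<bar>x - y\<bar>)) + 2 * pi * \<bar>x - y\<bar>"
proof -
  define A where "A = W lam (tau lam a x)"
  define B where "B = W lam (tau lam a y)"
  define p where "p = pL lam (tau lam a x)"
  define q where "q = pL lam (tau lam a y)"
  have A0: "0 \<le> A" unfolding A_def by (rule W_nonneg')
  have q0: "0 \<le> q w" for w unfolding q_def by (rule pL_nonneg)
  have qs: "(\<Sum>w\<in>words n. q w) = 1" unfolding q_def by (rule pL_sum)
  have pt: "\<bar>A * p w - B * q w\<bar> \<le> A * \<bar>p w - q w\<bar> + \<bar>A - B\<bar> * q w" for w
  proof -
    have e: "A * p w - B * q w = A * (p w - q w) + (A - B) * q w"
      by (simp add: algebra_simps)
    have "\<bar>A * (p w - q w) + (A - B) * q w\<bar> \<le> \<bar>A * (p w - q w)\<bar> + \<bar>(A - B) * q w\<bar>"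
      by (rule abs_triangle_ineq)
    also have "\<bar>A * (p w - q w)\<bar> = A * \<bar>p w - q w\<bar>"
      using A0 by (simp only: abs_mult abs_of_nonneg)
    also have "\<bar>(A - B) * q w\<bar> = \<bar>A - B\<bar> * q w"
      using q0[of w] by (simp only: abs_mult abs_of_nonneg)
    finally show ?thesis by (simp only: e)
  qed
  have "(\<Sum>w\<in>words n. \<bar>A * p w - B * q w\<bar>)
     \<le> (\<Sum>w\<in>words n. A * \<bar>p w - q w\<bar> + \<bar>A - B\<bar> * q w)"
    by (intro sum_mono pt)
  also have "\<dots> = A * (\<Sum>w\<in>words n. \<bar>p w - q w\<bar>) + \<bar>A - B\<bar> * (\<Sum>w\<in>words n. q w)"
    by (simp only: sum.distrib sum_distrib_left)
  also have "\<dots> = A * (\<Sum>w\<in>words n. \<bar>p w - q w\<bar>) + \<bar>A - B\<bar>"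
    by (simp only: qs mult_1_right)
  finally have S1: "(\<Sum>w\<in>words n. \<bar>A * p w - B * q w\<bar>) \<le> A * (\<Sum>w\<in>words n. \<bar>p w - q w\<bar>) + \<bar>A - B\<bar>" .
  have "(\<Sum>w\<in>words n. \<bar>p w - q w\<bar>) \<le> KL * \<bar>tau lam a x - tau lam a y\<bar>"
    unfolding p_def q_def by (rule IH)
  then have S2: "(\<Sum>w\<in>words n. \<bar>p w - q w\<bar>) \<le> KL * (lam * \<bar>x - y\<bar>)"
    by (simp only: tau_dist[OF lam0 lam1])
  have S3: "\<bar>A - B\<bar> \<le> 2 * pi * \<bar>x - y\<bar>" unfolding A_def B_def by (rule W_lip[OF lam0 lam1 a])
  have S4: "A * (\<Sum>w\<in>words n. \<bar>p w - q w\<bar>) \<le> A * (KL * (lam * \<bar>x - y\<bar>))"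
    using S2 A0 by (rule mult_left_mono)
  show ?thesis
    unfolding A_def[symmetric] B_def[symmetric] p_def[symmetric] q_def[symmetric]
    using S1 S3 S4 by linarith
qed

lemma pL_lip: "(\<Sum>w\<in>words n. \<bar>pL lam x w - pL lam y w\<bar>) \<le> KL * \<bar>x - y\<bar>"
proof (induction n arbitrary: x y)
  case 0 then show ?case using KL_nonneg by (simp add: words_0)
next
  case (Suc n)
  have "(\<Sum>w\<in>words (Suc n). \<bar>pL lam x w - pL lam y w\<bar>)
      \<le> W lam (tau lam 0 x) * (KL * (lam * \<bar>x - y\<bar>)) + 2 * pi * \<bar>x - y\<bar>
        + (W lam (tau lam (1/4) x) * (KL * (lam * \<bar>x - y\<bar>)) + 2 * pi * \<bar>x - y\<bar>)"
    unfolding sum_words_Suc pL.simps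
    by (intro add_mono lip_part Suc.IH) auto
  also have "\<dots> = (W lam (tau lam 0 x) + W lam (tau lam (1/4) x)) * (KL * (lam * \<bar>x - y\<bar>)) + 4 * pi * \<bar>x - y\<bar>"
    by (simp add: algebra_simps)
  also have "\<dots> = KL * \<bar>x - y\<bar>"
    using lam1 by (simp add: W_sum[OF lam0 lam1] KL_def field_simps)
  finally show ?case .
qed

end


definition MO :: "(nat \<Rightarrow> real) measure" where "MO = sigma Omega Cyls"

lemma cyl_sub: "cyl n \<omega> \<subseteq> Omega"
  by (auto simp: cyl_def)

lemma Cyls_Pow: "Cyls \<subseteq> Pow Omega"
  using cyl_sub by (auto simp: Cyls_def)

lemma space_MO: "space MO = Omega"
  unfolding MO_def using Cyls_Pow by (rule space_measure_of)

lemma sets_MO: "sets MO = sigma_sets Omega Cyls"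
  unfolding MO_def using Cyls_Pow by (rule sets_measure_of)

lemma zero_Omega: "(\<lambda>_. 0) \<in> Omega"
  by (simp add: Omega_def)

lemma Omega_cyl0: "Omega = cyl 0 (\<lambda>_. 0)"
  by (simp add: cyl_def)

lemma Omega_in_Cyls: "Omega \<in> Cyls"
  unfolding Cyls_def using Omega_cyl0 zero_Omega by blast

lemma extend_Omega:
  assumes "set w \<subseteq> {0, 1/4}"
  shows "(\<lambda>i. if i < length w then w ! i else 0) \<in> Omega"
  unfolding Omega_def
proof (rule Pi_I)
  fix i
  show "(if i < length w then w ! i else 0) \<in> {0, 1/4}"
  proof (cases "i < length w")
    case True
    have "w ! i \<in> {0, 1/4}" by (rule subsetD[OF assms nth_mem[OF True]])
    then show ?thesis using True by (simp only: if_True)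
  next
    case False then show ?thesis by simp
  qed
qed

lemma cylL_in_Cyls:
  assumes "set w \<subseteq> {0, 1/4}"
  shows "cylL w \<in> Cyls"
proof -
  define \<omega> where "\<omega> = (\<lambda>i. if i < length w then w ! i else 0)"
  have "\<omega> \<in> Omega" unfolding \<omega>_def by (rule extend_Omega[OF assms])
  moreover have "cylL w = cyl (length w) \<omega>" by (auto simp: cylL_def cyl_def \<omega>_def)
  ultimately show ?thesis unfolding Cyls_def by blast
qed

lemma Int_stable_Cyls: "Int_stable (insert {} Cyls)"
  unfolding Int_stable_def
proof (intro ballI)
  fix A B assume A: "A \<in> insert {} Cyls" and B: "B \<in> insert {} Cyls"
  show "A \<inter> B \<in> insert {} Cyls"
  proof (cases "A = {} \<or> B = {} \<or> A \<inter> B = {}")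
    case True then show ?thesis by auto
  next
    case False
    then obtain n \<omega> m \<eta> where A': "A = cyl n \<omega>" "\<omega> \<in> Omega" and B': "B = cyl m \<eta>" "\<eta> \<in> Omega"
      using A B by (auto simp: Cyls_def)
    from False obtain \<zeta> where \<zeta>: "\<zeta> \<in> A" "\<zeta> \<in> B" by blast
    define \<theta> where "\<theta> = (\<lambda>i. if i < n then \<omega> i else \<eta> i)"
    have \<theta>O: "\<theta> \<in> Omega" unfolding Omega_def
    proof (rule Pi_I)
      fix i
      show "\<theta> i \<in> {0, 1/4}"
        using funcset_mem[OF A'(2)[unfolded Omega_def], of i] funcset_mem[OF B'(2)[unfolded Omega_def], of i]
        by (simp add: \<theta>_def)
    qed
    have agree: "\<And>i. i < n \<Longrightarrow> i < m \<Longrightarrow> \<omega> i = \<eta> i"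
      using \<zeta> A'(1) B'(1) by (auto simp: cyl_def)
    have "A \<inter> B = cyl (max n m) \<theta>"
      using agree unfolding A'(1) B'(1) cyl_def \<theta>_def
      by (auto simp: less_max_iff_disj)
    then show ?thesis using \<theta>O by (auto simp: Cyls_def)
  qed
qed

lemma sigma_sets_insert_empty: "sigma_sets Omega (insert {} Cyls) = sigma_sets Omega Cyls"
proof
  show "sigma_sets Omega (insert {} Cyls) \<subseteq> sigma_sets Omega Cyls"
    by (intro sigma_sets_mono) (auto intro: sigma_sets.Empty sigma_sets.Basic)
  show "sigma_sets Omega Cyls \<subseteq> sigma_sets Omega (insert {} Cyls)"
    by (intro sigma_sets_mono') auto
qed

definition isP :: "real \<Rightarrow> real \<Rightarrow> (nat \<Rightarrow> real) measure \<Rightarrow> bool" where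
  "isP lam x M \<longleftrightarrow> prob_space M \<and> space M = Omega \<and> sets M = sigma_sets Omega Cyls \<and>
      (\<forall>n. \<forall>\<omega>\<in>Omega. emeasure M (cyl n \<omega>) =
          ennreal (\<Prod>k\<in>{1..n}. W lam (orbit lam x \<omega> k)))"

lemma Px_eq_The: "Px lam x = (THE M. isP lam x M)"
  unfolding Px_def isP_def ..

lemma isP_unique:
  assumes M: "isP lam x M" and N: "isP lam x N"
  shows "M = N"
proof (rule measure_eqI_generator_eq[OF Int_stable_Cyls, of Omega M N "\<lambda>_. Omega"])
  show "insert {} Cyls \<subseteq> Pow Omega" using Cyls_Pow by auto
  show "sets M = sigma_sets Omega (insert {} Cyls)"
    using M by (simp add: isP_def sigma_sets_insert_empty)
  show "sets N = sigma_sets Omega (insert {} Cyls)"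
    using N by (simp add: isP_def sigma_sets_insert_empty)
  show "range (\<lambda>_. Omega) \<subseteq> insert {} Cyls" using Omega_in_Cyls by auto
  show "(\<Union>i. Omega) = Omega" by simp
  show "emeasure M Omega \<noteq> \<infinity>" for i :: nat
  proof -
    interpret prob_space M using M by (simp add: isP_def)
    show ?thesis using M by (simp add: isP_def flip: emeasure_space_1)
  qed
  fix X assume "X \<in> insert {} Cyls"
  then show "emeasure M X = emeasure N X"
    using M N by (auto simp: isP_def Cyls_def)
qed

fun Fm :: "real \<Rightarrow> real \<Rightarrow> real \<Rightarrow> nat \<Rightarrow> real" where
  "Fm lam x u 0 = (if u < W lam (tau lam 0 x) then 0 else 1/4)"
| "Fm lam x u (Suc k) = (if u < W lam (tau lam 0 x)
      then Fm lam (tau lam 0 x) (u / W lam (tau lam 0 x)) k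
      else Fm lam (tau lam (1/4) x) ((u - W lam (tau lam 0 x)) / W lam (tau lam (1/4) x)) k)"

fun loL :: "real \<Rightarrow> real \<Rightarrow> real list \<Rightarrow> real" where
  "loL lam x [] = 0"
| "loL lam x (a # w) = (if a = 0 then W lam (tau lam 0 x) * loL lam (tau lam 0 x) w
      else W lam (tau lam 0 x) + W lam (tau lam (1/4) x) * loL lam (tau lam (1/4) x) w)"

fun hiL :: "real \<Rightarrow> real \<Rightarrow> real list \<Rightarrow> real" where
  "hiL lam x [] = 1"
| "hiL lam x (a # w) = (if a = 0 then W lam (tau lam 0 x) * hiL lam (tau lam 0 x) w
      else W lam (tau lam 0 x) + W lam (tau lam (1/4) x) * hiL lam (tau lam (1/4) x) w)"

lemma Fm_vals: "Fm lam x u k \<in> {0, 1/4}"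
  by (induction k arbitrary: x u) auto

lemma Fm_Omega: "(\<lambda>k. Fm lam x u k) \<in> Omega"
  using Fm_vals by (auto simp: Omega_def)

lemma all_less_Suc_split: "(\<forall>i<Suc n. P i) \<longleftrightarrow> P 0 \<and> (\<forall>j<n. P (Suc j))"
  by (auto simp: less_Suc_eq_0_disj)

context
  fixes lam :: real
  assumes lam0: "0 < lam" and lam1: "lam < 1"
begin

lemma Fm_pre:
  assumes "set w \<subseteq> {0, 1/4}"
  shows "{u \<in> {0..<1}. \<forall>i<length w. Fm lam x u i = w ! i} = {loL lam x w..<hiL lam x w}
     \<and> 0 \<le> loL lam x w \<and> loL lam x w \<le> hiL lam x w \<and> hiL lam x w \<le> 1
     \<and> hiL lam x w - loL lam x w = pL lam x w"
  using assms
proof (induction w arbitrary: x)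
  case Nil then show ?case by auto
next
  case (Cons a w)
  define c where "c = W lam (tau lam 0 x)"
  define d where "d = W lam (tau lam (1/4) x)"
  have cd: "c + d = 1" "0 \<le> c" "0 \<le> d" using W_sum[OF lam0 lam1] W_nonneg' by (auto simp: c_def d_def)
  have sw: "set w \<subseteq> {0, 1/4}" using Cons.prems by simp
  have a: "a = 0 \<or> a = 1/4" using Cons.prems by simp
  have split: "(\<forall>i<length (a # w). Fm lam x u i = (a # w) ! i) \<longleftrightarrow>
      Fm lam x u 0 = a \<and> (\<forall>j<length w. Fm lam x u (Suc j) = w ! j)" for u
    by (simp add: all_less_Suc_split)
  show ?case
  proof (cases "a = 0")
    case True
    define y where "y = tau lam 0 x"
    obtain lo hi where IH: "{v \<in> {0..<1}. \<forall>i<length w. Fm lam y v i = w ! i} = {lo..<hi}"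
      "0 \<le> lo" "lo \<le> hi" "hi \<le> 1" "hi - lo = pL lam y w"
      "lo = loL lam y w" "hi = hiL lam y w"
      using Cons.IH[OF sw, of y] by blast
    have lohi: "loL lam x (a # w) = c * lo" "hiL lam x (a # w) = c * hi"
      using True IH(6,7) by (simp_all add: c_def y_def)
    have mem: "u \<in> {u \<in> {0..<1}. \<forall>i<length (a # w). Fm lam x u i = (a # w) ! i} \<longleftrightarrow>
       0 \<le> u \<and> u < 1 \<and> u < c \<and> (\<forall>j<length w. Fm lam y (u / c) j = w ! j)" for u
      unfolding split using True by (auto simp: c_def y_def)
    have "{u \<in> {0..<1}. \<forall>i<length (a # w). Fm lam x u i = (a # w) ! i} = {c * lo..<c * hi}"
    proof (cases "c = 0")
      case True then show ?thesis using mem by auto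
    next
      case False
      then have c0: "0 < c" using cd by simp
      have "u \<in> {u \<in> {0..<1}. \<forall>i<length (a # w). Fm lam x u i = (a # w) ! i} \<longleftrightarrow> u \<in> {c * lo..<c * hi}" for u
      proof -
        have "(0 \<le> u \<and> u < 1 \<and> u < c) \<longleftrightarrow> u / c \<in> {0..<1}"
          using c0 cd by (auto simp: divide_simps)
        then have "u \<in> {u \<in> {0..<1}. \<forall>i<length (a # w). Fm lam x u i = (a # w) ! i} \<longleftrightarrow>
            u / c \<in> {v \<in> {0..<1}. \<forall>i<length w. Fm lam y v i = w ! i}"
          using mem by auto
        also have "\<dots> \<longleftrightarrow> lo \<le> u / c \<and> u / c < hi" using IH(1) by auto
        also have "\<dots> \<longleftrightarrow> c * lo \<le> u \<and> u < c * hi"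
          using c0 by (simp add: pos_le_divide_eq pos_divide_less_eq mult.commute)
        finally show ?thesis by simp
      qed
      then show ?thesis by blast
    qed
    moreover have "pL lam x (a # w) = c * (hi - lo)"
      using True IH(5) by (simp add: c_def y_def)
    moreover have "0 \<le> c * lo" "c * lo \<le> c * hi" "c * hi \<le> 1"
      using IH cd by (auto intro: mult_left_mono mult_le_one)
    ultimately show ?thesis using lohi by (simp add: right_diff_distrib)
  next
    case False
    then have a4: "a = 1/4" using a by simp
    define y where "y = tau lam (1/4) x"
    obtain lo hi where IH: "{v \<in> {0..<1}. \<forall>i<length w. Fm lam y v i = w ! i} = {lo..<hi}"
      "0 \<le> lo" "lo \<le> hi" "hi \<le> 1" "hi - lo = pL lam y w"
      "lo = loL lam y w" "hi = hiL lam y w"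
      using Cons.IH[OF sw, of y] by blast
    have lohi: "loL lam x (a # w) = c + d * lo" "hiL lam x (a # w) = c + d * hi"
      using False IH(6,7) by (simp_all add: c_def d_def y_def)
    have mem: "u \<in> {u \<in> {0..<1}. \<forall>i<length (a # w). Fm lam x u i = (a # w) ! i} \<longleftrightarrow>
       0 \<le> u \<and> u < 1 \<and> c \<le> u \<and> (\<forall>j<length w. Fm lam y ((u - c) / d) j = w ! j)" for u
      unfolding split using a4 by (auto simp: c_def d_def y_def not_less)
    have "{u \<in> {0..<1}. \<forall>i<length (a # w). Fm lam x u i = (a # w) ! i} = {c + d * lo..<c + d * hi}"
    proof (cases "d = 0")
      case True then show ?thesis using mem cd by auto
    next
      case False
      then have d0: "0 < d" using cd by simp
      have "u \<in> {u \<in> {0..<1}. \<forall>i<length (a # w). Fm lam x u i = (a # w) ! i} \<longleftrightarrow> u \<in> {c + d * lo..<c + d * hi}" for u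
      proof -
        have "(0 \<le> u \<and> u < 1 \<and> c \<le> u) \<longleftrightarrow> (u - c) / d \<in> {0..<1}"
          using d0 cd by (auto simp: divide_simps)
        then have "u \<in> {u \<in> {0..<1}. \<forall>i<length (a # w). Fm lam x u i = (a # w) ! i} \<longleftrightarrow>
            (u - c) / d \<in> {v \<in> {0..<1}. \<forall>i<length w. Fm lam y v i = w ! i}"
          using mem by auto
        also have "\<dots> \<longleftrightarrow> lo \<le> (u - c) / d \<and> (u - c) / d < hi" using IH(1) by auto
        also have "\<dots> \<longleftrightarrow> c + d * lo \<le> u \<and> u < c + d * hi"
          using d0 by (simp add: pos_le_divide_eq pos_divide_less_eq mult.commute algebra_simps)
        finally show ?thesis by simp
      qed
      then show ?thesis by blast
    qed
    moreover have "pL lam x (a # w) = d * (hi - lo)"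
      unfolding a4 using IH(5) by (simp add: d_def y_def)
    moreover have "0 \<le> c + d * lo" "c + d * lo \<le> c + d * hi" "c + d * hi \<le> 1"
    proof -
      show "0 \<le> c + d * lo" using cd IH by simp
      show "c + d * lo \<le> c + d * hi" using cd IH by (simp add: mult_left_mono)
      have "d * hi \<le> d * 1" using cd IH by (intro mult_left_mono) auto
      then show "c + d * hi \<le> 1" using cd by simp
    qed
    ultimately show ?thesis using lohi by (simp add: right_diff_distrib)
  qed
qed

definition U :: "real measure" where "U = restrict_space lborel {0..<1}"

lemma space_U: "space U = {0..<1}"
  by (simp add: U_def)

lemma sets_U_Ico: "0 \<le> a \<Longrightarrow> b \<le> 1 \<Longrightarrow> {a..<b} \<in> sets U"
  unfolding U_def by (subst sets_restrict_space_iff) auto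

lemma emeasure_U_Ico: "0 \<le> a \<Longrightarrow> a \<le> b \<Longrightarrow> b \<le> 1 \<Longrightarrow> emeasure U {a..<b} = ennreal (b - a)"
  unfolding U_def by (subst emeasure_restrict_space) auto

lemma prob_U: "prob_space U"
  by (rule prob_spaceI) (simp add: space_U emeasure_U_Ico[of 0 1, simplified])

definition Fmap :: "real \<Rightarrow> real \<Rightarrow> (nat \<Rightarrow> real)" where
  "Fmap x = (\<lambda>u. \<lambda>k. Fm lam x u k)"

lemma Fmap_pre_cyl:
  assumes "\<omega> \<in> Omega"
  shows "Fmap x -` cyl n \<omega> \<inter> space U = {loL lam x (map \<omega> [0..<n])..<hiL lam x (map \<omega> [0..<n])}"
    and "0 \<le> loL lam x (map \<omega> [0..<n])" "loL lam x (map \<omega> [0..<n]) \<le> hiL lam x (map \<omega> [0..<n])"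
    "hiL lam x (map \<omega> [0..<n]) \<le> 1"
    "hiL lam x (map \<omega> [0..<n]) - loL lam x (map \<omega> [0..<n]) = pL lam x (map \<omega> [0..<n])"
proof -
  have sw: "set (map \<omega> [0..<n]) \<subseteq> {0, 1/4}" using assms by (auto simp: Omega_def)
  note P = Fm_pre[OF sw, of x]
  have "Fmap x -` cyl n \<omega> \<inter> space U =
     {u \<in> {0..<1}. \<forall>i<length (map \<omega> [0..<n]). Fm lam x u i = (map \<omega> [0..<n]) ! i}"
    using Fm_Omega by (auto simp: Fmap_def cyl_def space_U)
  then show "Fmap x -` cyl n \<omega> \<inter> space U = {loL lam x (map \<omega> [0..<n])..<hiL lam x (map \<omega> [0..<n])}"
    using P by simp
  show "0 \<le> loL lam x (map \<omega> [0..<n])" "loL lam x (map \<omega> [0..<n]) \<le> hiL lam x (map \<omega> [0..<n])"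
    "hiL lam x (map \<omega> [0..<n]) \<le> 1"
    "hiL lam x (map \<omega> [0..<n]) - loL lam x (map \<omega> [0..<n]) = pL lam x (map \<omega> [0..<n])"
    using P by auto
qed

lemma Fmap_meas: "Fmap x \<in> measurable U MO"
proof (rule measurable_sigma_sets[OF sets_MO Cyls_Pow])
  show "Fmap x \<in> space U \<rightarrow> Omega" using Fm_Omega by (auto simp: Fmap_def)
  fix y assume "y \<in> Cyls"
  then obtain n \<omega> where "y = cyl n \<omega>" "\<omega> \<in> Omega" by (auto simp: Cyls_def)
  then show "Fmap x -` y \<inter> space U \<in> sets U"
    using Fmap_pre_cyl[of \<omega> x n] by (simp add: sets_U_Ico)
qed

lemma exists_isP: "isP lam x (distr U MO (Fmap x))"
  unfolding isP_def
proof (intro conjI allI ballI)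
  show "prob_space (distr U MO (Fmap x))"
    by (rule prob_space.prob_space_distr[OF prob_U Fmap_meas])
  show "space (distr U MO (Fmap x)) = Omega" by (simp add: space_MO)
  show "sets (distr U MO (Fmap x)) = sigma_sets Omega Cyls" by (simp add: sets_MO)
  fix n \<omega> assume \<omega>: "\<omega> \<in> Omega"
  have cs: "cyl n \<omega> \<in> sets MO" using \<omega> by (auto simp: sets_MO Cyls_def intro: sigma_sets.Basic)
  have "emeasure (distr U MO (Fmap x)) (cyl n \<omega>) = emeasure U (Fmap x -` cyl n \<omega> \<inter> space U)"
    by (rule emeasure_distr[OF Fmap_meas cs])
  also have "\<dots> = ennreal (pL lam x (map \<omega> [0..<n]))"
    using Fmap_pre_cyl[OF \<omega>, of x n] by (simp add: emeasure_U_Ico)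
  finally show "emeasure (distr U MO (Fmap x)) (cyl n \<omega>) = ennreal (\<Prod>k\<in>{1..n}. W lam (orbit lam x \<omega> k))"
    by (simp only: prod_orbit_pL)
qed

lemma Px_isP: "isP lam x (Px lam x)"
proof -
  have "Px lam x = distr U MO (Fmap x)"
    unfolding Px_eq_The
  proof (rule the_equality)
    show "isP lam x (distr U MO (Fmap x))" by (rule exists_isP)
    fix M assume "isP lam x M"
    then show "M = distr U MO (Fmap x)" using exists_isP by (rule isP_unique)
  qed
  then show ?thesis using exists_isP by simp
qed

end


definition shiftO :: "(nat \<Rightarrow> real) \<Rightarrow> (nat \<Rightarrow> real)" where
  "shiftO \<omega> = (\<lambda>i. \<omega> (Suc i))"

definition consO :: "real \<Rightarrow> (nat \<Rightarrow> real) \<Rightarrow> (nat \<Rightarrow> real)" where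
  "consO a \<eta> = (\<lambda>i. case i of 0 \<Rightarrow> a | Suc j \<Rightarrow> \<eta> j)"

lemma shiftO_Omega: "\<omega> \<in> Omega \<Longrightarrow> shiftO \<omega> \<in> Omega"
  by (auto simp: shiftO_def Omega_def)

lemma consO_Omega:
  assumes "a \<in> {0, 1/4}" "\<eta> \<in> Omega"
  shows "consO a \<eta> \<in> Omega"
  unfolding Omega_def
proof (rule Pi_I)
  fix i
  show "consO a \<eta> i \<in> {0, 1/4}"
  proof (cases i)
    case 0 then show ?thesis using assms(1) by (simp only: consO_def nat.case)
  next
    case (Suc j) then show ?thesis using funcset_mem[OF assms(2)[unfolded Omega_def] UNIV_I, of j]
      by (simp only: consO_def nat.case)
  qed
qed

lemma Omega_vals: "\<omega> \<in> Omega \<Longrightarrow> \<omega> k = 0 \<or> \<omega> k = 1/4"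
proof -
  assume "\<omega> \<in> Omega"
  then have "\<omega> k \<in> {0, 1/4}" unfolding Omega_def by (rule funcset_mem) (rule UNIV_I)
  then show ?thesis by blast
qed

lemma const_Omega: "a \<in> {0, 1/4} \<Longrightarrow> (\<lambda>_. a) \<in> Omega"
  unfolding Omega_def by (rule Pi_I)

lemma map_consO: "map (consO a \<eta>) [0..<Suc n] = a # map \<eta> [0..<n]"
  unfolding map_upt_Suc by (simp add: consO_def del: upt_Suc)

lemma word_as_map:
  assumes "set w \<subseteq> {0, 1/4}"
  shows "\<exists>\<omega>\<in>Omega. w = map \<omega> [0..<length w]"
proof -
  define \<omega> where "\<omega> = (\<lambda>i. if i < length w then w ! i else 0)"
  have "\<omega> \<in> Omega" unfolding \<omega>_def by (rule extend_Omega[OF assms])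
  moreover have "w = map \<omega> [0..<length w]" by (simp add: \<omega>_def nth_equalityI)
  ultimately show ?thesis by blast
qed

context
  fixes lam :: real
  assumes lam0: "0 < lam" and lam1: "lam < 1"
begin

lemma P_prob: "prob_space (Px lam x)"
  using Px_isP[OF lam0 lam1] by (simp add: isP_def)

lemma P_space: "space (Px lam x) = Omega"
  using Px_isP[OF lam0 lam1] by (simp add: isP_def)

lemma P_sets: "sets (Px lam x) = sigma_sets Omega Cyls"
  using Px_isP[OF lam0 lam1] by (simp add: isP_def)

lemma P_cyl: "\<omega> \<in> Omega \<Longrightarrow> emeasure (Px lam x) (cyl n \<omega>) = ennreal (pL lam x (map \<omega> [0..<n]))"
proof -
  assume o: "\<omega> \<in> Omega"
  have "emeasure (Px lam x) (cyl n \<omega>) = ennreal (\<Prod>k\<in>{1..n}. W lam (orbit lam x \<omega> k))"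
    using Px_isP[OF lam0 lam1, of x] o unfolding isP_def by blast
  then show ?thesis by (simp only: prod_orbit_pL)
qed

lemma cyl_sets: "\<omega> \<in> Omega \<Longrightarrow> cyl n \<omega> \<in> sets (Px lam x)"
  by (auto simp: P_sets Cyls_def intro: sigma_sets.Basic)

lemma P_measure_cyl: "\<omega> \<in> Omega \<Longrightarrow> measure (Px lam x) (cyl n \<omega>) = pL lam x (map \<omega> [0..<n])"
  using P_cyl pL_nonneg by (simp add: measure_def)

lemma cylL_sets: "set w \<subseteq> {0, 1/4} \<Longrightarrow> cylL w \<in> sets (Px lam x)"
  using word_as_map cyl_sets cyl_eq_cylL by metis

lemma P_measure_cylL: "set w \<subseteq> {0, 1/4} \<Longrightarrow> measure (Px lam x) (cylL w) = pL lam x w"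
  using word_as_map P_measure_cyl cyl_eq_cylL by metis

lemma sing_eq: "\<omega> \<in> Omega \<Longrightarrow> {\<omega>} = (\<Inter>n. cyl n \<omega>)"
proof
  assume "\<omega> \<in> Omega"
  then show "{\<omega>} \<subseteq> (\<Inter>n. cyl n \<omega>)" by (auto simp: cyl_def)
  show "(\<Inter>n. cyl n \<omega>) \<subseteq> {\<omega>}"
  proof
    fix \<eta> assume "\<eta> \<in> (\<Inter>n. cyl n \<omega>)"
    have "\<eta> i = \<omega> i" for i
    proof -
      have "\<eta> \<in> cyl (Suc i) \<omega>" using \<open>\<eta> \<in> (\<Inter>n. cyl n \<omega>)\<close> by blast
      then show ?thesis by (simp add: cyl_def)
    qed
    then show "\<eta> \<in> {\<omega>}" by (simp add: fun_eq_iff)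
  qed
qed

lemma sing_sets: "\<omega> \<in> Omega \<Longrightarrow> {\<omega>} \<in> sets (Px lam x)"
  using sing_eq[of \<omega>] cyl_sets[of \<omega>] by (auto intro!: sets.countable_INT)

lemma countable_sets:
  assumes "countable E" "E \<subseteq> Omega"
  shows "E \<in> sets (Px lam x)"
proof (rule sets.countable)
  fix a assume "a \<in> E"
  then show "{a} \<in> sets (Px lam x)" using assms(2) sing_sets by blast
next
  show "countable E" by (rule assms(1))
qed

lemma decseq_cyl: "decseq (\<lambda>n. cyl n \<omega>)"
  by (auto simp: decseq_def cyl_def)

lemma meas_sing_lim:
  assumes "\<omega> \<in> Omega"
  shows "(\<lambda>n. pL lam x (map \<omega> [0..<n])) \<longlonglongrightarrow> measure (Px lam x) {\<omega>}"
proof -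
  interpret prob_space "Px lam x" by (rule P_prob)
  have "(\<lambda>n. measure (Px lam x) (cyl n \<omega>)) \<longlonglongrightarrow> measure (Px lam x) (\<Inter>n. cyl n \<omega>)"
    using assms cyl_sets decseq_cyl by (intro finite_Lim_measure_decseq) auto
  then show ?thesis using assms by (simp add: P_measure_cyl flip: sing_eq)
qed

lemma meas_sing_le:
  assumes "\<omega> \<in> Omega"
  shows "measure (Px lam x) {\<omega>} \<le> pL lam x (map \<omega> [0..<n])"
proof -
  interpret prob_space "Px lam x" by (rule P_prob)
  have sub: "{\<omega>} \<subseteq> cyl n \<omega>" using assms by (simp add: cyl_def)
  have "measure (Px lam x) {\<omega>} \<le> measure (Px lam x) (cyl n \<omega>)"
    by (rule finite_measure_mono[OF sub cyl_sets[OF assms]])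
  then show ?thesis using assms by (simp add: P_measure_cyl)
qed

lemma limit_abs_le:
  fixes f g :: "nat \<Rightarrow> real"
  assumes "f \<longlonglongrightarrow> a" "g \<longlonglongrightarrow> b" "\<And>n. \<bar>f n - g n\<bar> \<le> c"
  shows "\<bar>a - b\<bar> \<le> c"
proof -
  have "(\<lambda>n. \<bar>f n - g n\<bar>) \<longlonglongrightarrow> \<bar>a - b\<bar>" by (intro tendsto_intros assms)
  then show ?thesis by (rule tendsto_upperbound) (use assms(3) in auto)
qed

lemma lip_finite:
  assumes F: "finite F" "F \<subseteq> Omega"
  shows "\<bar>measure (Px lam x) F - measure (Px lam y) F\<bar> \<le> KL lam * \<bar>x - y\<bar>"
proof -
  define G where "G n = (\<Union>\<omega>\<in>F. cyl n \<omega>)" for n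
  define S where "S n = (\<lambda>\<omega>. map \<omega> [0..<n]) ` F" for n
  have G_sets: "G n \<in> sets (Px lam z)" for n z
    unfolding G_def using F(2) by (intro sets.finite_UN F(1) cyl_sets) auto
  have G_dec: "decseq G" unfolding G_def decseq_def cyl_def by auto
  have G_Int: "(\<Inter>n. G n) = F"
  proof
    show "F \<subseteq> (\<Inter>n. G n)" using F by (auto simp: G_def cyl_def)
    show "(\<Inter>n. G n) \<subseteq> F"
    proof
      fix \<eta> assume \<eta>: "\<eta> \<in> (\<Inter>n. G n)"
      show "\<eta> \<in> F"
      proof (rule ccontr)
        assume "\<eta> \<notin> F"
        have "\<forall>\<omega>\<in>F. \<exists>i. \<eta> i \<noteq> \<omega> i"
        proof
          fix \<omega> assume "\<omega> \<in> F"
          then have "\<eta> \<noteq> \<omega>" using \<open>\<eta> \<notin> F\<close> by blast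
          then show "\<exists>i. \<eta> i \<noteq> \<omega> i" by (simp add: fun_eq_iff)
        qed
        then obtain i where i: "\<And>\<omega>. \<omega> \<in> F \<Longrightarrow> \<eta> (i \<omega>) \<noteq> \<omega> (i \<omega>)" by metis
        obtain N where N: "\<And>k. k \<in> i ` F \<Longrightarrow> k < N"
          using F(1) finite_nat_set_iff_bounded by (metis finite_imageI)
        from \<eta> have "\<eta> \<in> G N" by auto
        then obtain \<omega> where "\<omega> \<in> F" "\<eta> \<in> cyl N \<omega>" by (auto simp: G_def)
        then show False using i N by (auto simp: cyl_def)
      qed
    qed
  qed
  have GS: "G n = (\<Union>w\<in>S n. cylL w)" for n
    by (auto simp: G_def S_def cyl_eq_cylL)
  have S_words: "S n \<subseteq> words n" for n using F map_in_words by (auto simp: S_def)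
  have S_fin: "finite (S n)" for n using F by (simp add: S_def)
  have mG: "measure (Px lam z) (G n) = (\<Sum>w\<in>S n. pL lam z w)" for n z
  proof -
    interpret prob_space "Px lam z" by (rule P_prob)
    have "measure (Px lam z) (\<Union>w\<in>S n. cylL w) = (\<Sum>w\<in>S n. measure (Px lam z) (cylL w))"
    proof (rule finite_measure_finite_Union)
      show "finite (S n)" by (rule S_fin)
      show "cylL ` S n \<subseteq> sets (Px lam z)" using S_words by (auto simp: words_def intro!: cylL_sets)
      show "disjoint_family_on cylL (S n)"
        unfolding disjoint_family_on_def using S_words cylL_words_disj by blast
    qed
    also have "\<dots> = (\<Sum>w\<in>S n. pL lam z w)"
      using S_words by (intro sum.cong refl P_measure_cylL) (auto simp: words_def)
    finally show ?thesis by (simp add: GS)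
  qed
  have bound: "\<bar>measure (Px lam x) (G n) - measure (Px lam y) (G n)\<bar> \<le> KL lam * \<bar>x - y\<bar>" for n
  proof -
    have "\<bar>measure (Px lam x) (G n) - measure (Px lam y) (G n)\<bar> = \<bar>\<Sum>w\<in>S n. pL lam x w - pL lam y w\<bar>"
      by (simp add: mG sum_subtractf)
    also have "\<dots> \<le> (\<Sum>w\<in>S n. \<bar>pL lam x w - pL lam y w\<bar>)" by (rule sum_abs)
    also have "\<dots> \<le> (\<Sum>w\<in>words n. \<bar>pL lam x w - pL lam y w\<bar>)"
      by (intro sum_mono2 finite_words S_words) auto
    also have "\<dots> \<le> KL lam * \<bar>x - y\<bar>" by (rule pL_lip[OF lam0 lam1])
    finally show ?thesis .
  qed
  have lim: "(\<lambda>n. measure (Px lam z) (G n)) \<longlonglongrightarrow> measure (Px lam z) F" for z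
  proof -
    interpret prob_space "Px lam z" by (rule P_prob)
    show ?thesis using G_sets G_dec by (subst G_Int[symmetric]) (intro finite_Lim_measure_decseq; auto)
  qed
  show ?thesis by (rule limit_abs_le[OF lim lim bound])
qed

lemma lip_countable:
  assumes E: "countable E" "E \<subseteq> Omega"
  shows "\<bar>measure (Px lam x) E - measure (Px lam y) E\<bar> \<le> KL lam * \<bar>x - y\<bar>"
proof (cases "E = {}")
  case True then show ?thesis using KL_nonneg[OF lam0 lam1] by simp
next
  case False
  define e where "e = from_nat_into E"
  define F where "F k = e ` {..<k}" for k
  have eE: "e i \<in> E" for i using False by (simp add: e_def from_nat_into)
  have F_fin: "finite (F k)" for k by (simp add: F_def)
  have F_sub: "F k \<subseteq> Omega" for k using eE E by (auto simp: F_def)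
  have F_inc: "incseq F" unfolding incseq_def F_def by auto
  have F_Un: "(\<Union>k. F k) = E"
  proof
    show "(\<Union>k. F k) \<subseteq> E" using eE by (auto simp: F_def)
    show "E \<subseteq> (\<Union>k. F k)"
    proof
      fix z assume "z \<in> E"
      then have "z \<in> range e" using E(1) False by (simp add: e_def range_from_nat_into)
      then obtain i where "z = e i" by auto
      then have "z \<in> F (Suc i)" by (auto simp: F_def)
      then show "z \<in> (\<Union>k. F k)" by blast
    qed
  qed
  have lim: "(\<lambda>k. measure (Px lam z) (F k)) \<longlonglongrightarrow> measure (Px lam z) E" for z
  proof -
    interpret prob_space "Px lam z" by (rule P_prob)
    show ?thesis
      using F_inc F_fin F_sub by (subst F_Un[symmetric]) (intro finite_Lim_measure_incseq; auto intro!: countable_sets countable_finite)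
  qed
  show ?thesis by (rule limit_abs_le[OF lim lim lip_finite[OF F_fin F_sub]])
qed

lemma shift_meas: "shiftO \<in> measurable (Px lam x) (Px lam y)"
proof (rule measurable_sigma_sets[OF P_sets Cyls_Pow])
  show "shiftO \<in> space (Px lam x) \<rightarrow> Omega" using shiftO_Omega by (auto simp: P_space)
  fix B assume "B \<in> Cyls"
  then obtain n \<eta> where B: "B = cyl n \<eta>" "\<eta> \<in> Omega" by (auto simp: Cyls_def)
  have "shiftO -` B \<inter> space (Px lam x) = cyl (Suc n) (consO 0 \<eta>) \<union> cyl (Suc n) (consO (1/4) \<eta>)"
  proof (intro set_eqI iffI)
    fix \<omega> assume "\<omega> \<in> shiftO -` B \<inter> space (Px lam x)"
    then have o: "\<omega> \<in> Omega" "\<forall>i<n. \<omega> (Suc i) = \<eta> i" by (auto simp: B cyl_def P_space shiftO_def)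
    then have "\<omega> 0 = 0 \<or> \<omega> 0 = 1/4" by (intro Omega_vals) auto
    then show "\<omega> \<in> cyl (Suc n) (consO 0 \<eta>) \<union> cyl (Suc n) (consO (1/4) \<eta>)"
      using o by (auto simp: cyl_def consO_def less_Suc_eq_0_disj)
  next
    fix \<omega> assume "\<omega> \<in> cyl (Suc n) (consO 0 \<eta>) \<union> cyl (Suc n) (consO (1/4) \<eta>)"
    then have o: "\<omega> \<in> Omega" "\<forall>i<n. \<omega> (Suc i) = \<eta> i" by (auto simp: cyl_def consO_def)
    have "shiftO \<omega> \<in> Omega" by (rule shiftO_Omega[OF o(1)])
    then show "\<omega> \<in> shiftO -` B \<inter> space (Px lam x)"
      using o by (simp add: B cyl_def P_space shiftO_def)
  qed
  also have "\<dots> \<in> sets (Px lam x)"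
    using B(2) by (intro sets.Un cyl_sets consO_Omega) auto
  finally show "shiftO -` B \<inter> space (Px lam x) \<in> sets (Px lam x)" .
qed

lemma markov_emeasure:
  assumes a: "a \<in> {0, 1/4}" and B: "B \<in> sigma_sets Omega Cyls"
  shows "emeasure (Px lam x) (cyl 1 (\<lambda>_. a) \<inter> (shiftO -` B \<inter> Omega))
       = ennreal (W lam (tau lam a x)) * emeasure (Px lam (tau lam a x)) B"
proof -
  define y where "y = tau lam a x"
  define Ca where "Ca = cyl 1 (\<lambda>_. a)"
  have aO: "(\<lambda>_. a) \<in> Omega" using a by (rule const_Omega)
  have Ca_sets: "Ca \<in> sets (Px lam x)" unfolding Ca_def using aO by (rule cyl_sets)
  define \<mu> where "\<mu> = distr (density (Px lam x) (indicator Ca)) (Px lam y) shiftO"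
  define \<nu> where "\<nu> = scale_measure (ennreal (W lam y)) (Px lam y)"
  have smeas: "shiftO \<in> measurable (density (Px lam x) (indicator Ca)) (Px lam y)"
    using shift_meas by (simp add: measurable_cong_sets[OF sets_density refl])
  have em\<mu>: "emeasure \<mu> X = emeasure (Px lam x) (Ca \<inter> (shiftO -` X \<inter> Omega))"
    if X: "X \<in> sets (Px lam y)" for X
  proof -
    have "emeasure \<mu> X = emeasure (density (Px lam x) (indicator Ca)) (shiftO -` X \<inter> Omega)"
      unfolding \<mu>_def by (subst emeasure_distr[OF smeas X]) (simp add: P_space)
    also have "\<dots> = emeasure (Px lam x) (Ca \<inter> (shiftO -` X \<inter> Omega))"
      using measurable_sets[OF shift_meas X] Ca_sets by (intro emeasure_restricted) (auto simp: P_space)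
    finally show ?thesis .
  qed
  have eq: "emeasure \<mu> X = emeasure \<nu> X" if X: "X \<in> insert {} Cyls" for X
  proof (cases "X = {}")
    case True then show ?thesis by simp
  next
    case False
    then obtain n \<eta> where X': "X = cyl n \<eta>" "\<eta> \<in> Omega" using X by (auto simp: Cyls_def)
    have "Ca \<inter> (shiftO -` X \<inter> Omega) = cyl (Suc n) (consO a \<eta>)"
      by (auto simp: Ca_def X' cyl_def shiftO_def consO_def less_Suc_eq_0_disj intro: shiftO_Omega[unfolded shiftO_def])
    then have "emeasure \<mu> X = emeasure (Px lam x) (cyl (Suc n) (consO a \<eta>))"
      using em\<mu>[OF cyl_sets[OF X'(2)], of n] X'(1) by simp
    also have "\<dots> = ennreal (pL lam x (map (consO a \<eta>) [0..<Suc n]))"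
      by (rule P_cyl[OF consO_Omega[OF a X'(2)]])
    also have "\<dots> = ennreal (pL lam x (a # map \<eta> [0..<n]))"
      by (simp only: map_consO)
    also have "\<dots> = ennreal (W lam y) * ennreal (pL lam y (map \<eta> [0..<n]))"
      by (simp add: y_def ennreal_mult W_nonneg' pL_nonneg)
    also have "\<dots> = emeasure \<nu> X" using X' by (simp add: \<nu>_def P_cyl)
    finally show ?thesis .
  qed
  have "\<mu> = \<nu>"
  proof (rule measure_eqI_generator_eq[OF Int_stable_Cyls, of Omega \<mu> \<nu> "\<lambda>_. Omega"])
    show "insert {} Cyls \<subseteq> Pow Omega" using Cyls_Pow by auto
    show "sets \<mu> = sigma_sets Omega (insert {} Cyls)"
      by (simp add: \<mu>_def P_sets sigma_sets_insert_empty)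
    show "sets \<nu> = sigma_sets Omega (insert {} Cyls)"
      by (simp add: \<nu>_def P_sets sigma_sets_insert_empty)
    show "range (\<lambda>_. Omega) \<subseteq> insert {} Cyls" using Omega_in_Cyls by auto
    show "(\<Union>i. Omega) = Omega" by simp
    show "emeasure \<mu> Omega \<noteq> \<infinity>" for i :: nat
    proof -
      interpret prob_space "Px lam y" by (rule P_prob)
      have "emeasure \<mu> Omega = ennreal (W lam y) * emeasure (Px lam y) Omega"
        using eq[of Omega] Omega_in_Cyls by (simp add: \<nu>_def)
      also have "\<dots> = ennreal (W lam y)" using emeasure_space_1 by (simp add: P_space)
      finally show ?thesis by simp
    qed
  qed (use eq in auto)
  have BS: "B \<in> sets (Px lam y)" using B by (simp add: P_sets)
  have "emeasure (Px lam x) (Ca \<inter> (shiftO -` B \<inter> Omega)) = emeasure \<nu> B"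
    using em\<mu>[OF BS] \<open>\<mu> = \<nu>\<close> by simp
  then show ?thesis by (simp add: \<nu>_def Ca_def y_def)
qed

lemma harmonic:
  assumes E: "E \<in> sigma_sets Omega Cyls" and inv: "\<And>\<omega>. \<omega> \<in> Omega \<Longrightarrow> \<omega> \<in> E \<longleftrightarrow> shiftO \<omega> \<in> E"
  shows "measure (Px lam x) E = W lam (tau lam 0 x) * measure (Px lam (tau lam 0 x)) E
       + W lam (tau lam (1/4) x) * measure (Px lam (tau lam (1/4) x)) E"
proof -
  interpret prob_space "Px lam x" by (rule P_prob)
  define D where "D a = cyl 1 (\<lambda>_. a) \<inter> (shiftO -` E \<inter> Omega)" for a :: real
  have EO: "E \<subseteq> Omega" using E sigma_sets_into_sp[OF Cyls_Pow] by blast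
  have ED: "E = D 0 \<union> D (1/4)"
  proof (intro set_eqI iffI)
    fix \<omega> assume "\<omega> \<in> E"
    then have o: "\<omega> \<in> Omega" "shiftO \<omega> \<in> E" using EO inv by auto
    then have "\<omega> 0 = 0 \<or> \<omega> 0 = 1/4" by (intro Omega_vals) auto
    then show "\<omega> \<in> D 0 \<union> D (1/4)" using o by (auto simp: D_def cyl_def)
  next
    fix \<omega> assume "\<omega> \<in> D 0 \<union> D (1/4)"
    then show "\<omega> \<in> E" using inv by (auto simp: D_def cyl_def)
  qed
  have D_sets: "D a \<in> sets (Px lam x)" if "a \<in> {0, 1/4}" for a
  proof -
    have "(\<lambda>_. a) \<in> Omega" using that by (rule const_Omega)
    moreover have "shiftO -` E \<inter> Omega \<in> sets (Px lam x)"
      using measurable_sets[OF shift_meas[of x x], of E] E by (simp add: P_sets P_space)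
    ultimately show ?thesis unfolding D_def by (rule sets.Int[OF cyl_sets[where n=1 and x=x]])
  qed
  have Ddisj: "D 0 \<inter> D (1/4) = {}" by (auto simp: D_def cyl_def)
  have mD: "measure (Px lam x) (D a) = W lam (tau lam a x) * measure (Px lam (tau lam a x)) E"
    if a: "a \<in> {0, 1/4}" for a
  proof -
    interpret Py: prob_space "Px lam (tau lam a x)" by (rule P_prob)
    have "ennreal (measure (Px lam x) (D a)) = emeasure (Px lam x) (D a)"
      using D_sets[OF a] by (simp add: emeasure_eq_measure)
    also have "\<dots> = ennreal (W lam (tau lam a x)) * emeasure (Px lam (tau lam a x)) E"
      unfolding D_def by (rule markov_emeasure[OF a E])
    also have "\<dots> = ennreal (W lam (tau lam a x) * measure (Px lam (tau lam a x)) E)"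
      by (simp add: Py.emeasure_eq_measure ennreal_mult W_nonneg')
    finally show ?thesis
      using W_nonneg' by (subst (asm) ennreal_inj) auto
  qed
  have "measure (Px lam x) E = measure (Px lam x) (D 0) + measure (Px lam x) (D (1/4))"
    using D_sets Ddisj by (subst ED) (intro finite_measure_Union; auto)
  then show ?thesis using mD by simp
qed

end


lemma N0_sub: "N0 \<subseteq> Omega" by (auto simp: N0_def)
lemma N1_sub: "N1 \<subseteq> Omega" by (auto simp: N1_def)


lemma N0_countable: "countable N0"
proof -
  let ?f = "\<lambda>\<omega>::nat\<Rightarrow>real. {k. \<omega> k = 1/4}"
  have inj: "inj_on ?f N0"
  proof (rule inj_onI)
    fix \<omega> \<eta> assume o: "\<omega> \<in> N0" "\<eta> \<in> N0" and eq: "?f \<omega> = ?f \<eta>"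
    show "\<omega> = \<eta>"
    proof
      fix k
      have "k \<in> ?f \<omega> \<longleftrightarrow> k \<in> ?f \<eta>" using eq by (simp only:)
      then have iff: "(\<omega> k = 1/4) = (\<eta> k = 1/4)" by (simp only: mem_Collect_eq)
      have vo: "\<omega> k = 0 \<or> \<omega> k = 1/4" using o(1) N0_sub Omega_vals by blast
      have ve: "\<eta> k = 0 \<or> \<eta> k = 1/4" using o(2) N0_sub Omega_vals by blast
      show "\<omega> k = \<eta> k"
      proof (cases "\<omega> k = 1/4")
        case True then show ?thesis using iff by simp
      next
        case False
        then have "\<omega> k = 0" "\<eta> k \<noteq> 1/4" using vo iff by auto
        then show ?thesis using ve by auto
      qed
    qed
  qed
  have "?f ` N0 \<subseteq> Collect finite"
  proof
    fix A assume "A \<in> ?f ` N0"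
    then obtain \<omega> N where A: "A = ?f \<omega>" "\<forall>n\<ge>N. \<omega> n = 0" by (auto simp: N0_def)
    then have "A \<subseteq> {..<N}" by (auto simp: not_less[symmetric])
    then show "A \<in> Collect finite" using finite_subset by auto
  qed
  then have "countable (?f ` N0)" using countable_subset countable_Collect_finite by blast
  then show ?thesis using inj countable_image_inj_on by blast
qed

lemma N1_countable: "countable N1"
proof -
  let ?f = "\<lambda>\<omega>::nat\<Rightarrow>real. {k. \<omega> k = 0}"
  have inj: "inj_on ?f N1"
  proof (rule inj_onI)
    fix \<omega> \<eta> assume o: "\<omega> \<in> N1" "\<eta> \<in> N1" and eq: "?f \<omega> = ?f \<eta>"
    show "\<omega> = \<eta>"
    proof
      fix k
      have "k \<in> ?f \<omega> \<longleftrightarrow> k \<in> ?f \<eta>" using eq by (simp only:)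
      then have iff: "(\<omega> k = 0) = (\<eta> k = 0)" by (simp only: mem_Collect_eq)
      have vo: "\<omega> k = 0 \<or> \<omega> k = 1/4" using o(1) N1_sub Omega_vals by blast
      have ve: "\<eta> k = 0 \<or> \<eta> k = 1/4" using o(2) N1_sub Omega_vals by blast
      show "\<omega> k = \<eta> k"
      proof (cases "\<omega> k = 0")
        case True then show ?thesis using iff by simp
      next
        case False
        then have "\<omega> k = 1/4" "\<eta> k \<noteq> 0" using vo iff by auto
        then show ?thesis using ve by auto
      qed
    qed
  qed
  have "?f ` N1 \<subseteq> Collect finite"
  proof
    fix A assume "A \<in> ?f ` N1"
    then obtain \<omega> N where A: "A = ?f \<omega>" "\<forall>n\<ge>N. \<omega> n = 1/4" by (auto simp: N1_def)
    then have "A \<subseteq> {..<N}" by (auto simp: not_less[symmetric])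
    then show "A \<in> Collect finite" using finite_subset by auto
  qed
  then have "countable (?f ` N1)" using countable_subset countable_Collect_finite by blast
  then show ?thesis using inj countable_image_inj_on by blast
qed

lemma N0_shift: "\<omega> \<in> Omega \<Longrightarrow> \<omega> \<in> N0 \<longleftrightarrow> shiftO \<omega> \<in> N0"
proof -
  assume o: "\<omega> \<in> Omega"
  have "(\<exists>N. \<forall>n\<ge>N. \<omega> n = 0) \<longleftrightarrow> (\<exists>N. \<forall>n\<ge>N. \<omega> (Suc n) = 0)"
  proof
    assume "\<exists>N. \<forall>n\<ge>N. \<omega> n = 0"
    then obtain N where N: "\<forall>n\<ge>N. \<omega> n = 0" by blast
    have "\<forall>n\<ge>N. \<omega> (Suc n) = 0"
    proof (intro allI impI)
      fix n assume "N \<le> n" then have "N \<le> Suc n" by simp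
      then show "\<omega> (Suc n) = 0" using N by blast
    qed
    then show "\<exists>N. \<forall>n\<ge>N. \<omega> (Suc n) = 0" by blast
  next
    assume "\<exists>N. \<forall>n\<ge>N. \<omega> (Suc n) = 0"
    then obtain N where N: "\<forall>n\<ge>N. \<omega> (Suc n) = 0" by blast
    have "\<forall>n\<ge>Suc N. \<omega> n = 0"
    proof (intro allI impI)
      fix n assume "Suc N \<le> n"
      then obtain m where "n = Suc m" "N \<le> m" by (cases n) auto
      then show "\<omega> n = 0" using N by simp
    qed
    then show "\<exists>N. \<forall>n\<ge>N. \<omega> n = 0" by blast
  qed
  then show ?thesis using o shiftO_Omega[OF o] by (simp add: N0_def shiftO_def)
qed

lemma N1_shift: "\<omega> \<in> Omega \<Longrightarrow> \<omega> \<in> N1 \<longleftrightarrow> shiftO \<omega> \<in> N1"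
proof -
  assume o: "\<omega> \<in> Omega"
  have "(\<exists>N. \<forall>n\<ge>N. \<omega> n = 1/4) \<longleftrightarrow> (\<exists>N. \<forall>n\<ge>N. \<omega> (Suc n) = 1/4)"
  proof
    assume "\<exists>N. \<forall>n\<ge>N. \<omega> n = 1/4"
    then obtain N where N: "\<forall>n\<ge>N. \<omega> n = 1/4" by blast
    have "\<forall>n\<ge>N. \<omega> (Suc n) = 1/4"
    proof (intro allI impI)
      fix n assume "N \<le> n" then have "N \<le> Suc n" by simp
      then show "\<omega> (Suc n) = 1/4" using N by blast
    qed
    then show "\<exists>N. \<forall>n\<ge>N. \<omega> (Suc n) = 1/4" by blast
  next
    assume "\<exists>N. \<forall>n\<ge>N. \<omega> (Suc n) = 1/4"
    then obtain N where N: "\<forall>n\<ge>N. \<omega> (Suc n) = 1/4" by blast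
    have "\<forall>n\<ge>Suc N. \<omega> n = 1/4"
    proof (intro allI impI)
      fix n assume "Suc N \<le> n"
      then obtain m where "n = Suc m" "N \<le> m" by (cases n) auto
      then show "\<omega> n = 1/4" using N by simp
    qed
    then show "\<exists>N. \<forall>n\<ge>N. \<omega> n = 1/4" by blast
  qed
  then show ?thesis using o shiftO_Omega[OF o] by (simp add: N1_def shiftO_def)
qed

lemma N01_disj: "N0 \<inter> N1 = {}"
proof (rule ccontr)
  assume "N0 \<inter> N1 \<noteq> {}"
  then obtain \<omega> where o: "\<omega> \<in> N0" "\<omega> \<in> N1" by blast
  obtain N where A: "\<forall>n\<ge>N. \<omega> n = 0" using o(1) unfolding N0_def by blast
  obtain M where B: "\<forall>n\<ge>M. \<omega> n = (1/4::real)" using o(2) unfolding N1_def by blast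
  have "\<omega> (max N M) = 0" using A by simp
  moreover have "\<omega> (max N M) = 1/4" using B by simp
  ultimately show False by simp
qed

lemma map_tail_const:
  assumes "\<forall>k\<ge>N. \<omega> k = c"
  shows "map \<omega> [0..<N + j] = map \<omega> [0..<N] @ replicate j c"
proof -
  have "[0..<N + j] = [0..<N] @ [N..<N + j]" by (rule upt_add_eq_append) simp
  moreover have "map \<omega> [N..<N + j] = replicate j c"
    using assms by (intro nth_equalityI) auto
  ultimately show ?thesis by simp
qed

lemma pL_replicate:
  assumes "tau lam a y = y" "W lam (tau lam a y) = 1"
  shows "pL lam y (replicate n a) = 1"
  using assms by (induction n) auto

context
  fixes lam :: real
  assumes lam0: "0 < lam" and lam1: "lam < 1"
begin

lemma endpt_rep0: "endpt lam y (replicate j 0) = lam ^ j * y"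
  by (induction j arbitrary: y) (simp_all add: tau_def)

lemma endpt_rep1: "endpt lam y (replicate j (1/4)) = cL lam + lam ^ j * (y - cL lam)"
proof (induction j arbitrary: y)
  case 0 then show ?case by simp
next
  case (Suc j)
  have "tau lam (1/4) y - cL lam = lam * (y - cL lam)"
    using cL_fix[OF lam0 lam1] by (simp add: tau_def algebra_simps)
  then show ?case using Suc[of "tau lam (1/4) y"] by simp
qed

lemma const_path:
  assumes a: "a \<in> {0, 1/4}" and fx: "tau lam a y = y" and W1: "W lam (tau lam a y) = 1"
  shows "measure (Px lam y) {\<lambda>_. a} = 1"
proof -
  have aO: "(\<lambda>_. a) \<in> Omega" using a by (rule const_Omega)
  have "(\<lambda>n. pL lam y (map (\<lambda>_. a) [0..<n])) \<longlonglongrightarrow> measure (Px lam y) {\<lambda>_. a}"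
    by (rule meas_sing_lim[OF lam0 lam1 aO])
  moreover have "pL lam y (map (\<lambda>_. a) [0..<n]) = 1" for n
    using pL_replicate[OF fx W1] by (simp add: map_replicate_const)
  ultimately have "(\<lambda>n. 1) \<longlonglongrightarrow> measure (Px lam y) {\<lambda>_. a}" by simp
  from LIMSEQ_unique[OF this tendsto_const] show ?thesis .
qed

definition hE :: "(nat \<Rightarrow> real) set \<Rightarrow> real \<Rightarrow> real" where
  "hE E y = measure (Px lam y) E"

lemma hE_nonneg: "0 \<le> hE E y"
  by (simp add: hE_def)

lemma hE_le1: "hE E y \<le> 1"
proof -
  interpret prob_space "Px lam y" by (rule P_prob[OF lam0 lam1])
  show ?thesis by (simp add: hE_def)
qed

lemma hE_cont:
  assumes "countable E" "E \<subseteq> Omega"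
  shows "continuous_on A (hE E)"
proof (rule lipschitz_on_continuous_on)
  show "(KL lam)-lipschitz_on A (hE E)"
    using lip_countable[OF lam0 lam1 assms] KL_nonneg[OF lam0 lam1]
    by (intro lipschitz_onI) (auto simp: hE_def dist_real_def)
qed

lemma hE_harm:
  assumes "E \<subseteq> Omega" "countable E" "\<And>\<omega>. \<omega> \<in> Omega \<Longrightarrow> \<omega> \<in> E \<longleftrightarrow> shiftO \<omega> \<in> E"
  shows "hE E y = W lam (tau lam 0 y) * hE E (tau lam 0 y) + W lam (tau lam (1/4) y) * hE E (tau lam (1/4) y)"
proof -
  have "E \<in> sigma_sets Omega Cyls"
    using countable_sets[OF lam0 lam1 assms(2,1), of y] by (simp add: P_sets[OF lam0 lam1])
  then show ?thesis unfolding hE_def by (rule harmonic[OF lam0 lam1 _ assms(3)])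
qed

lemma minprin:
  assumes harm: "\<And>y. y \<in> XL lam \<Longrightarrow> h y = W lam (tau lam 0 y) * h (tau lam 0 y) + W lam (tau lam (1/4) y) * h (tau lam (1/4) y)"
    and min: "\<And>y. y \<in> XL lam \<Longrightarrow> m \<le> h y"
    and w: "set w \<subseteq> {0, 1/4}"
  shows "x \<in> XL lam \<Longrightarrow> h x = m \<Longrightarrow> 0 < pL lam x w \<Longrightarrow> endpt lam x w \<in> XL lam \<and> h (endpt lam x w) = m"
  using w
proof (induction w arbitrary: x)
  case Nil then show ?case by simp
next
  case (Cons a w)
  have a: "a = 0 \<or> a = 1/4" using Cons.prems by simp
  have pos: "0 < W lam (tau lam a x) * pL lam (tau lam a x) w" using Cons.prems by simp
  then have Wa: "0 < W lam (tau lam a x)" and pa: "0 < pL lam (tau lam a x) w"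
    using W_nonneg'[of lam "tau lam a x"] pL_nonneg[of lam "tau lam a x" w] by (auto simp: zero_less_mult_iff)
  have t0: "tau lam 0 x \<in> XL lam" and t1: "tau lam (1/4) x \<in> XL lam"
    using tau_XL[OF lam0 lam1 Cons.prems(1)] by auto
  define W0 where "W0 = W lam (tau lam 0 x)"
  define W1 where "W1 = W lam (tau lam (1/4) x)"
  have s: "W0 + W1 = 1" using W_sum[OF lam0 lam1] by (simp add: W0_def W1_def)
  have hm: "m = W0 * h (tau lam 0 x) + W1 * h (tau lam (1/4) x)"
    using harm[OF Cons.prems(1)] Cons.prems(2) unfolding W0_def W1_def by linarith
  have "W0 * (h (tau lam 0 x) - m) + W1 * (h (tau lam (1/4) x) - m)
      = (W0 * h (tau lam 0 x) + W1 * h (tau lam (1/4) x)) - (W0 + W1) * m"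
    by (simp add: algebra_simps)
  also have "\<dots> = 0" using hm s by simp
  finally have z: "W0 * (h (tau lam 0 x) - m) + W1 * (h (tau lam (1/4) x) - m) = 0" .
  have n0: "0 \<le> W0 * (h (tau lam 0 x) - m)" using min[OF t0] W_nonneg' by (simp add: W0_def)
  have n1: "0 \<le> W1 * (h (tau lam (1/4) x) - m)" using min[OF t1] W_nonneg' by (simp add: W1_def)
  have e0: "W0 * (h (tau lam 0 x) - m) = 0" and e1: "W1 * (h (tau lam (1/4) x) - m) = 0"
    using z n0 n1 by linarith+
  have "tau lam a x \<in> XL lam \<and> h (tau lam a x) = m"
    using a
  proof
    assume "a = 0"
    then show ?thesis using e0 Wa t0 by (simp add: W0_def)
  next
    assume a4: "a = 1/4"
    show ?thesis unfolding a4 using e1 Wa[unfolded a4] t1 by (simp add: W1_def)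
  qed
  moreover have sw: "set w \<subseteq> {0, 1/4}" using Cons.prems by simp
  ultimately show ?case using Cons.IH[of "tau lam a x"] pa by simp
qed

lemma limit_const:
  fixes h :: "real \<Rightarrow> real"
  assumes cont: "continuous_on (XL lam) h" and s: "s \<longlonglongrightarrow> l" "\<And>j. s j \<in> XL lam" "l \<in> XL lam"
    and hs: "\<And>j. h (s j) = m"
  shows "h l = m"
proof -
  have "(\<lambda>j. h (s j)) \<longlonglongrightarrow> h l"
    by (rule continuous_on_tendsto_compose[OF cont s(1) s(3)]) (use s(2) in auto)
  then have "(\<lambda>j. m) \<longlonglongrightarrow> h l" using hs by simp
  from LIMSEQ_unique[OF this tendsto_const] show ?thesis .
qed

lemma min_path:
  assumes E: "countable E" "E \<subseteq> Omega" "\<And>\<omega>. \<omega> \<in> Omega \<Longrightarrow> \<omega> \<in> E \<longleftrightarrow> shiftO \<omega> \<in> E"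
    and nz: "\<forall>y\<in>XL lam. hE E y \<noteq> 0"
  shows "\<exists>x\<in>XL lam. \<exists>\<omega>\<in>E. (\<forall>y\<in>XL lam. hE E x \<le> hE E y) \<and>
     (\<forall>n. endpt lam x (map \<omega> [0..<n]) \<in> XL lam \<and> hE E (endpt lam x (map \<omega> [0..<n])) = hE E x)"
proof -
  obtain x where x: "x \<in> XL lam" "\<And>y. y \<in> XL lam \<Longrightarrow> hE E x \<le> hE E y"
    using continuous_attains_inf[OF XL_compact[OF lam0 lam1] _ hE_cont[OF E(1,2)]] zero_XL[OF lam0 lam1] by blast
  interpret prob_space "Px lam x" by (rule P_prob[OF lam0 lam1])
  have "hE E x \<noteq> 0" using nz x(1) by blast
  have "\<exists>\<omega>\<in>E. 0 < measure (Px lam x) {\<omega>}"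
  proof (rule ccontr)
    assume "\<not> ?thesis"
    then have z: "\<And>\<omega>. \<omega> \<in> E \<Longrightarrow> measure (Px lam x) {\<omega>} = 0" using measure_nonneg by (meson not_less order_antisym)
    have "{\<omega>} \<in> null_sets (Px lam x)" if o: "\<omega> \<in> E" for \<omega>
    proof -
      have s: "{\<omega>} \<in> sets (Px lam x)" using o E(2) sing_sets[OF lam0 lam1] by blast
      have "emeasure (Px lam x) {\<omega>} = 0" using z[OF o] s by (simp add: emeasure_eq_measure)
      then show ?thesis using s by (rule null_setsI)
    qed
    then have "(\<Union>\<omega>\<in>E. {\<omega>}) \<in> null_sets (Px lam x)" by (intro null_sets_UN' E(1))
    then have "measure (Px lam x) E = 0" by (simp add: measure_def null_setsD1)
    then show False using \<open>hE E x \<noteq> 0\<close> by (simp add: hE_def)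
  qed
  then obtain \<omega> where \<omega>: "\<omega> \<in> E" "0 < measure (Px lam x) {\<omega>}" by blast
  have "\<forall>n. endpt lam x (map \<omega> [0..<n]) \<in> XL lam \<and> hE E (endpt lam x (map \<omega> [0..<n])) = hE E x"
  proof
    fix n
    have pos: "0 < pL lam x (map \<omega> [0..<n])"
      using \<omega> meas_sing_le[OF lam0 lam1, of \<omega> x n] E(2) by fastforce
    have sw: "set (map \<omega> [0..<n]) \<subseteq> {0, 1/4}" using \<omega>(1) E(2) Omega_vals by fastforce
    show "endpt lam x (map \<omega> [0..<n]) \<in> XL lam \<and> hE E (endpt lam x (map \<omega> [0..<n])) = hE E x"
      by (rule minprin[OF hE_harm[OF E(2,1,3)] x(2) sw x(1) refl pos])
  qed
  then show ?thesis using x \<omega>(1) by blast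
qed

lemma tail0_limit:
  fixes h :: "real \<Rightarrow> real"
  assumes cont: "continuous_on (XL lam) h" and x: "x \<in> XL lam"
    and tail: "\<forall>k\<ge>N. \<omega> k = 0"
    and path: "\<forall>n. endpt lam x (map \<omega> [0..<n]) \<in> XL lam \<and> h (endpt lam x (map \<omega> [0..<n])) = m"
  shows "h 0 = m"
proof -
  define z where "z = endpt lam x (map \<omega> [0..<N])"
  have s: "endpt lam x (map \<omega> [0..<N + j]) = lam ^ j * z" for j
    by (simp add: map_tail_const[OF tail] endpt_append endpt_rep0 z_def)
  have "(\<lambda>j. lam ^ j * z) \<longlonglongrightarrow> 0"
    using lam0 lam1 by (intro tendsto_mult_left_zero LIMSEQ_power_zero) auto
  moreover have "lam ^ j * z \<in> XL lam" "h (lam ^ j * z) = m" for j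
    using path[rule_format, of "N + j"] s[of j] by auto
  ultimately show ?thesis using limit_const[OF cont] zero_XL[OF lam0 lam1] by blast
qed

lemma tail1_limit:
  fixes h :: "real \<Rightarrow> real"
  assumes cont: "continuous_on (XL lam) h" and x: "x \<in> XL lam"
    and tail: "\<forall>k\<ge>N. \<omega> k = 1/4"
    and path: "\<forall>n. endpt lam x (map \<omega> [0..<n]) \<in> XL lam \<and> h (endpt lam x (map \<omega> [0..<n])) = m"
  shows "h (cL lam) = m"
proof -
  define z where "z = endpt lam x (map \<omega> [0..<N])"
  have s: "endpt lam x (map \<omega> [0..<N + j]) = cL lam + lam ^ j * (z - cL lam)" for j
    by (simp add: map_tail_const[OF tail] endpt_append endpt_rep1 z_def)
  have "(\<lambda>j. lam ^ j * (z - cL lam)) \<longlonglongrightarrow> 0"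
    using lam0 lam1 by (intro tendsto_mult_left_zero LIMSEQ_power_zero) auto
  then have "(\<lambda>j. cL lam + lam ^ j * (z - cL lam)) \<longlonglongrightarrow> cL lam + 0"
    by (intro tendsto_add tendsto_const)
  moreover have "cL lam + lam ^ j * (z - cL lam) \<in> XL lam" "h (cL lam + lam ^ j * (z - cL lam)) = m" for j
    using path[rule_format, of "N + j"] s[of j] by auto
  ultimately show ?thesis using limit_const[OF cont] cL_XL[OF lam0 lam1] by auto
qed

lemma h0_eq: "h0 lam = hE N0" by (simp add: fun_eq_iff h0_def hE_def)
lemma h1_eq: "h1 lam = hE N1" by (simp add: fun_eq_iff h1_def hE_def)

lemma h0_zero: "h0 lam 0 = 1"
proof -
  interpret prob_space "Px lam 0" by (rule P_prob[OF lam0 lam1])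
  have z: "(\<lambda>_. 0::real) \<in> N0" by (auto simp: N0_def Omega_def)
  have "measure (Px lam 0) {\<lambda>_. 0} = 1"
    by (rule const_path) (auto simp: tau_def W_def)
  moreover have "measure (Px lam 0) {\<lambda>_. 0} \<le> measure (Px lam 0) N0"
    using z countable_sets[OF lam0 lam1 N0_countable N0_sub] by (intro finite_measure_mono) auto
  ultimately show ?thesis unfolding h0_def using prob_le_1[of N0] by linarith
qed

lemma sum_h01: "h0 lam y + h1 lam y = hE (N0 \<union> N1) y"
proof -
  interpret prob_space "Px lam y" by (rule P_prob[OF lam0 lam1])
  show ?thesis unfolding h0_def h1_def hE_def
    using countable_sets[OF lam0 lam1 N0_countable N0_sub] countable_sets[OF lam0 lam1 N1_countable N1_sub] N01_disj
    by (intro finite_measure_Union[symmetric]) auto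
qed

lemma part1:
  "continuous_on (XL lam) (h0 lam)
   \<and> (\<forall>x\<in>XL lam. RW lam (h0 lam) x = h0 lam x)
   \<and> ((\<forall>x\<in>XL lam. h0 lam x \<noteq> 0) \<longrightarrow> (\<forall>x\<in>XL lam. h0 lam x = 1))"
proof (intro conjI ballI impI)
  show "continuous_on (XL lam) (h0 lam)" unfolding h0_eq by (rule hE_cont[OF N0_countable N0_sub])
  fix x
  show "RW lam (h0 lam) x = h0 lam x"
    unfolding RW_def h0_eq by (rule hE_harm[OF N0_sub N0_countable N0_shift, symmetric])
next
  assume nz: "\<forall>x\<in>XL lam. h0 lam x \<noteq> 0"
  obtain x \<omega> where x: "x \<in> XL lam" "\<omega> \<in> N0" "\<forall>y\<in>XL lam. hE N0 x \<le> hE N0 y"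
    and path: "\<forall>n. endpt lam x (map \<omega> [0..<n]) \<in> XL lam \<and> hE N0 (endpt lam x (map \<omega> [0..<n])) = hE N0 x"
    using min_path[OF N0_countable N0_sub N0_shift] nz unfolding h0_eq by blast
  obtain N where tail: "\<forall>k\<ge>N. \<omega> k = 0" using x(2) by (auto simp: N0_def)
  have "hE N0 0 = hE N0 x"
    by (rule tail0_limit[OF hE_cont[OF N0_countable N0_sub] x(1) tail path])
  then have "hE N0 x = 1" using h0_zero h0_eq by simp
  fix y assume "y \<in> XL lam"
  then show "h0 lam y = 1" using x(3) \<open>hE N0 x = 1\<close> hE_le1[of N0 y] unfolding h0_eq by force
qed

end

lemma cL_val:
  assumes n: "n \<ge> 1" and lam: "lam = 1 - 1 / (2 * real n)"
  shows "W lam (tau lam (1/4) (cL lam)) = 1"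
proof -
  have p: "0 < 1 / (2 * real n)" using n by simp
  have q: "1 / (2 * real n) \<le> 1 / 2" using n by (intro divide_left_mono) auto
  have lam0: "0 < lam" and lam1: "lam < 1" using p q lam by linarith+
  have c: "cL lam = (2 * real n - 1) / 4"
    using n by (simp add: cL_def lam field_simps)
  have arg: "2 * pi * cL lam = real n * pi - pi / 2"
    by (simp add: c field_simps)
  have "sin (real n * pi - pi / 2) = - cos (real n * pi)"
    by (simp add: sin_diff)
  then have "(sin (2 * pi * cL lam))\<^sup>2 = (cos (real n * pi))\<^sup>2" by (simp add: arg)
  also have "\<dots> = 1 - (sin (real n * pi))\<^sup>2" by (rule cos_squared_eq)
  also have "\<dots> = 1" by simp
  finally show ?thesis by (simp add: W1_eq[OF lam0 lam1])
qed


context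
  fixes lam :: real
  assumes lam0: "0 < lam" and lam1: "lam < 1"
begin

lemma h_nonneg: "0 \<le> h0 lam y" "0 \<le> h1 lam y"
  by (simp_all add: h0_def h1_def)

lemma N01_props:
  "countable (N0 \<union> N1)" "N0 \<union> N1 \<subseteq> Omega"
  "\<And>\<omega>. \<omega> \<in> Omega \<Longrightarrow> \<omega> \<in> N0 \<union> N1 \<longleftrightarrow> shiftO \<omega> \<in> N0 \<union> N1"
  using N0_countable N1_countable N0_sub N1_sub N0_shift N1_shift by auto

lemma part2:
  assumes n: "n \<ge> 1" and lamn: "lam = 1 - 1 / (2 * real n)"
  shows "continuous_on (XL lam) (h1 lam)
          \<and> (\<forall>x\<in>XL lam. RW lam (h1 lam) x = h1 lam x)
          \<and> (\<exists>x\<in>XL lam. h0 lam x = 0)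
          \<and> (\<exists>x\<in>XL lam. h1 lam x = 0)
          \<and> (\<exists>x\<in>XL lam. \<exists>y\<in>XL lam. h0 lam x \<noteq> h0 lam y)
          \<and> (\<exists>x\<in>XL lam. \<exists>y\<in>XL lam. h1 lam x \<noteq> h1 lam y)
          \<and> ((\<forall>x\<in>XL lam. h0 lam x + h1 lam x \<noteq> 0) \<longrightarrow>
               (\<forall>x\<in>XL lam. h0 lam x + h1 lam x = 1))"
proof -
  have W1c: "W lam (tau lam (1/4) (cL lam)) = 1" by (rule cL_val[OF n lamn])
  have h1c: "h1 lam (cL lam) = 1"
  proof -
    interpret prob_space "Px lam (cL lam)" by (rule P_prob[OF lam0 lam1])
    have z: "(\<lambda>_. 1/4::real) \<in> N1" using const_Omega[of "1/4"] by (auto simp: N1_def)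
    have "measure (Px lam (cL lam)) {\<lambda>_. 1/4} = 1"
      by (rule const_path[OF lam0 lam1 _ cL_fix[OF lam0 lam1] W1c]) simp
    moreover have "measure (Px lam (cL lam)) {\<lambda>_. 1/4} \<le> measure (Px lam (cL lam)) N1"
      using z countable_sets[OF lam0 lam1 N1_countable N1_sub] by (intro finite_measure_mono) auto
    ultimately show ?thesis unfolding h1_def using prob_le_1[of N1] by linarith
  qed
  have s1: "h0 lam y + h1 lam y \<le> 1" for y
    using sum_h01[OF lam0 lam1, of y] hE_le1[OF lam0 lam1, of "N0 \<union> N1" y] by simp
  have h0c: "h0 lam (cL lam) = 0" using s1[of "cL lam"] h1c h_nonneg(1)[of "cL lam"] by simp
  have h10: "h1 lam 0 = 0" using s1[of 0] h0_zero[OF lam0 lam1] h_nonneg(2)[of 0] by simp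
  have c0: "cL lam \<in> XL lam" by (rule cL_XL[OF lam0 lam1])
  have z0: "0 \<in> XL lam" by (rule zero_XL[OF lam0 lam1])
  have cont: "continuous_on (XL lam) (h1 lam)"
    unfolding h1_eq[OF lam0 lam1] by (rule hE_cont[OF lam0 lam1 N1_countable N1_sub])
  have harm: "\<forall>x\<in>XL lam. RW lam (h1 lam) x = h1 lam x"
  proof
    fix x
    show "RW lam (h1 lam) x = h1 lam x"
      unfolding RW_def h1_eq[OF lam0 lam1]
      by (rule hE_harm[OF lam0 lam1 N1_sub N1_countable N1_shift, symmetric])
  qed
  have ex1: "\<exists>x\<in>XL lam. h0 lam x = 0" using c0 h0c by blast
  have ex2: "\<exists>x\<in>XL lam. h1 lam x = 0" using z0 h10 by blast
  have ex3: "\<exists>x\<in>XL lam. \<exists>y\<in>XL lam. h0 lam x \<noteq> h0 lam y"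
    using c0 z0 h0c h0_zero[OF lam0 lam1] by (metis zero_neq_one)
  have ex4: "\<exists>x\<in>XL lam. \<exists>y\<in>XL lam. h1 lam x \<noteq> h1 lam y"
    using c0 z0 h1c h10 by (metis zero_neq_one)
  have sum: "(\<forall>x\<in>XL lam. h0 lam x + h1 lam x \<noteq> 0) \<longrightarrow> (\<forall>x\<in>XL lam. h0 lam x + h1 lam x = 1)"
  proof (intro impI ballI)
    assume nz: "\<forall>x\<in>XL lam. h0 lam x + h1 lam x \<noteq> 0"
    let ?E = "N0 \<union> N1"
    have nz': "\<forall>y\<in>XL lam. hE lam ?E y \<noteq> 0" using nz sum_h01[OF lam0 lam1] by simp
    obtain x \<omega> where x: "x \<in> XL lam" "\<omega> \<in> ?E" "\<forall>y\<in>XL lam. hE lam ?E x \<le> hE lam ?E y"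
      and path: "\<forall>n. endpt lam x (map \<omega> [0..<n]) \<in> XL lam \<and> hE lam ?E (endpt lam x (map \<omega> [0..<n])) = hE lam ?E x"
      using min_path[OF lam0 lam1 N01_props nz'] by blast
    have contE: "continuous_on (XL lam) (hE lam ?E)" by (rule hE_cont[OF lam0 lam1 N01_props(1,2)])
    have m1: "hE lam ?E x = 1"
    proof (cases "\<omega> \<in> N0")
      case True
      obtain N where tail: "\<forall>k\<ge>N. \<omega> k = 0" using True by (auto simp: N0_def)
      have "hE lam ?E 0 = hE lam ?E x" by (rule tail0_limit[OF lam0 lam1 contE x(1) tail path])
      moreover have "hE lam ?E 0 = 1" using sum_h01[OF lam0 lam1, of 0] h0_zero[OF lam0 lam1] h10 by simp
      ultimately show ?thesis by simp
    next
      case False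
      then have "\<omega> \<in> N1" using x(2) by blast
      then obtain N where tail: "\<forall>k\<ge>N. \<omega> k = 1/4" by (auto simp: N1_def)
      have "hE lam ?E (cL lam) = hE lam ?E x" by (rule tail1_limit[OF lam0 lam1 contE x(1) tail path])
      moreover have "hE lam ?E (cL lam) = 1" using sum_h01[OF lam0 lam1, of "cL lam"] h0c h1c by simp
      ultimately show ?thesis by simp
    qed
    fix y assume y: "y \<in> XL lam"
    have "1 \<le> hE lam ?E y" using x(3) y m1 by force
    then show "h0 lam y + h1 lam y = 1" using s1[of y] sum_h01[OF lam0 lam1, of y] by simp
  qed
  show ?thesis using cont harm ex1 ex2 ex3 ex4 sum by blast
qed

end

theorem lemma4p1:
  fixes lam :: real
  assumes "0 < lam" and "lam < 1"
  shows "(continuous_on (XL lam) (h0 lam)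
          \<and> (\<forall>x\<in>XL lam. RW lam (h0 lam) x = h0 lam x)
          \<and> ((\<forall>x\<in>XL lam. h0 lam x \<noteq> 0) \<longrightarrow> (\<forall>x\<in>XL lam. h0 lam x = 1)))
       \<and> (\<forall>n::nat. n \<ge> 1 \<and> lam = 1 - 1 / (2 * real n) \<longrightarrow>
            continuous_on (XL lam) (h1 lam)
          \<and> (\<forall>x\<in>XL lam. RW lam (h1 lam) x = h1 lam x)
          \<and> (\<exists>x\<in>XL lam. h0 lam x = 0)
          \<and> (\<exists>x\<in>XL lam. h1 lam x = 0)
          \<and> (\<exists>x\<in>XL lam. \<exists>y\<in>XL lam. h0 lam x \<noteq> h0 lam y)
          \<and> (\<exists>x\<in>XL lam. \<exists>y\<in>XL lam. h1 lam x \<noteq> h1 lam y)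
          \<and> ((\<forall>x\<in>XL lam. h0 lam x + h1 lam x \<noteq> 0) \<longrightarrow>
               (\<forall>x\<in>XL lam. h0 lam x + h1 lam x = 1)))"
proof (rule conjI)
  show "continuous_on (XL lam) (h0 lam)
          \<and> (\<forall>x\<in>XL lam. RW lam (h0 lam) x = h0 lam x)
          \<and> ((\<forall>x\<in>XL lam. h0 lam x \<noteq> 0) \<longrightarrow> (\<forall>x\<in>XL lam. h0 lam x = 1))"
    by (rule part1[OF assms])
  show "\<forall>n::nat. n \<ge> 1 \<and> lam = 1 - 1 / (2 * real n) \<longrightarrow>
            continuous_on (XL lam) (h1 lam)
          \<and> (\<forall>x\<in>XL lam. RW lam (h1 lam) x = h1 lam x)
          \<and> (\<exists>x\<in>XL lam. h0 lam x = 0)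
          \<and> (\<exists>x\<in>XL lam. h1 lam x = 0)
          \<and> (\<exists>x\<in>XL lam. \<exists>y\<in>XL lam. h0 lam x \<noteq> h0 lam y)
          \<and> (\<exists>x\<in>XL lam. \<exists>y\<in>XL lam. h1 lam x \<noteq> h1 lam y)
          \<and> ((\<forall>x\<in>XL lam. h0 lam x + h1 lam x \<noteq> 0) \<longrightarrow>
               (\<forall>x\<in>XL lam. h0 lam x + h1 lam x = 1))"
  proof (intro allI impI)
    fix n :: nat assume h: "n \<ge> 1 \<and> lam = 1 - 1 / (2 * real n)"
    show "continuous_on (XL lam) (h1 lam)
          \<and> (\<forall>x\<in>XL lam. RW lam (h1 lam) x = h1 lam x)
          \<and> (\<exists>x\<in>XL lam. h0 lam x = 0)
          \<and> (\<exists>x\<in>XL lam. h1 lam x = 0)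
          \<and> (\<exists>x\<in>XL lam. \<exists>y\<in>XL lam. h0 lam x \<noteq> h0 lam y)
          \<and> (\<exists>x\<in>XL lam. \<exists>y\<in>XL lam. h1 lam x \<noteq> h1 lam y)
          \<and> ((\<forall>x\<in>XL lam. h0 lam x + h1 lam x \<noteq> 0) \<longrightarrow>
               (\<forall>x\<in>XL lam. h0 lam x + h1 lam x = 1))"
      using part2[OF assms] h by blast
  qed
qed

end
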